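(* For lossless transmission of arbitrarily correlated sources $(S_1,S_2)$ over a discrete memoryless two-way channel $p(y_1,y_2|x_1,x_2)$, source-channel rate $b=1$ is achievable (even with restricted encoders that do not use past channel outputs) if there is a joint distribution $$p(q,s_1,s_2,x_1,x_2,y_1,y_2)=p(q)p(s_1,s_2)p(x_1|q,s_1)p(x_2|q,s_2)p(y_1,y_2|x_1,x_2)$$ such that $H(S_1|S_2)<I(X_1;Y_2|X_2,S_2,Q)$ and $H(S_2|S_1)<I(X_2;Y_1|X_1,S_1,Q)$.
   Context: Two-way channel model: $(S_{1,k},S_{2,k})$ i.i.d. $\sim p(s_1,s_2)$ on finite alphabets; finite channel alphabets. User $i\in\{1,2\}$ observes $S_i^m$ and at time $j\le n$ sends $X_{i,j}=f_{i,j}(S_i^m,Y_i^{j-1})$, where $Y_i$ is user $i$'s channel output. User 2 decodes $\hat S_1^m$ from $(Y_2^n,S_2^m)$ and user 1 decodes $\hat S_2^m$ from $(Y_1^n,S_1^m)$. Error probability $P_e^{(m,n)}=\Pr\{\bigcup_{k=1,2}\{S_k^m\neq\hat S_k^m\}\}$. Rate $b$ is achievable if for every $\epsilon>0$ there exist positive integers $m,n$ with $n/m=b$ and encoders/decoders with $P_e^{(m,n)}<\epsilon$. Restricted encoders: $X_{i,j}$ depends only on $S_i^m$. *)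

theory Defs
  imports Complex_Main
begin

definition is_pmf :: "('a::finite \<Rightarrow> real) \<Rightarrow> bool" where
  "is_pmf p \<longleftrightarrow> (\<forall>a. 0 \<le> p a) \<and> (\<Sum>a\<in>UNIV. p a) = 1"

definition prv :: "('w::finite \<Rightarrow> real) \<Rightarrow> ('w \<Rightarrow> 'v) \<Rightarrow> 'v \<Rightarrow> real" where
  "prv J f v = (\<Sum>w\<in>{w. f w = v}. J w)"

definition cond_entropy ::
  "('w::finite \<Rightarrow> real) \<Rightarrow> ('w \<Rightarrow> 'a) \<Rightarrow> ('w \<Rightarrow> 'b) \<Rightarrow> real" where
  "cond_entropy J A B =
     - (\<Sum>w\<in>UNIV. J w * log 2 (prv J (\<lambda>u. (A u, B u)) (A w, B w) / prv J B (B w)))"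

definition cond_mutual_info ::
  "('w::finite \<Rightarrow> real) \<Rightarrow> ('w \<Rightarrow> 'a) \<Rightarrow> ('w \<Rightarrow> 'b) \<Rightarrow> ('w \<Rightarrow> 'c) \<Rightarrow> real" where
  "cond_mutual_info J A B C =
     (\<Sum>w\<in>UNIV. J w * log 2
        ((prv J (\<lambda>u. (A u, B u, C u)) (A w, B w, C w) * prv J C (C w)) /
         (prv J (\<lambda>u. (A u, C u)) (A w, C w) * prv J (\<lambda>u. (B u, C u)) (B w, C w))))"

text \<open>Sequences are lists; index j ranges over 0..<n, so the past outputs Y_i^{j-1}
  are take j y.
  Encoders: f1 j s1 y1past, f2 j s2 y2past. Decoders: g2 y2 s2 (estimate of S1^m),
  g1 y1 s1 (estimate of S2^m).\<close>

definition error_prob ::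
  "('s1::finite \<times> 's2::finite \<Rightarrow> real) \<Rightarrow>
   ('x1::finite \<Rightarrow> 'x2::finite \<Rightarrow> ('y1::finite \<times> 'y2::finite) \<Rightarrow> real) \<Rightarrow>
   nat \<Rightarrow> nat \<Rightarrow>
   (nat \<Rightarrow> 's1 list \<Rightarrow> 'y1 list \<Rightarrow> 'x1) \<Rightarrow>
   (nat \<Rightarrow> 's2 list \<Rightarrow> 'y2 list \<Rightarrow> 'x2) \<Rightarrow>
   ('y1 list \<Rightarrow> 's1 list \<Rightarrow> 's2 list) \<Rightarrow>
   ('y2 list \<Rightarrow> 's2 list \<Rightarrow> 's1 list) \<Rightarrow> real" where
  "error_prob P W m n f1 f2 g1 g2 =
     (\<Sum>s1\<in>{xs. length xs = m}. \<Sum>s2\<in>{xs. length xs = m}.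
      \<Sum>y1\<in>{ys. length ys = n}. \<Sum>y2\<in>{ys. length ys = n}.
        (\<Prod>k<m. P (s1 ! k, s2 ! k)) *
        (\<Prod>j<n. W (f1 j s1 (take j y1)) (f2 j s2 (take j y2)) (y1 ! j, y2 ! j)) *
        (if g2 y2 s2 \<noteq> s1 \<or> g1 y1 s1 \<noteq> s2 then 1 else 0))"

definition restricted_encoder :: "(nat \<Rightarrow> 's list \<Rightarrow> 'y list \<Rightarrow> 'x) \<Rightarrow> bool" where
  "restricted_encoder f \<longleftrightarrow> (\<forall>j s ys ys'. f j s ys = f j s ys')"

definition achievable_restricted ::
  "('s1::finite \<times> 's2::finite \<Rightarrow> real) \<Rightarrow>
   ('x1::finite \<Rightarrow> 'x2::finite \<Rightarrow> ('y1::finite \<times> 'y2::finite) \<Rightarrow> real) \<Rightarrow> real \<Rightarrow> bool" where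
  "achievable_restricted P W b \<longleftrightarrow>
     (\<forall>\<epsilon>>0. \<exists>m n. m > 0 \<and> n > 0 \<and> real n / real m = b \<and>
        (\<exists>(f1 :: nat \<Rightarrow> 's1 list \<Rightarrow> 'y1 list \<Rightarrow> 'x1) (f2 :: nat \<Rightarrow> 's2 list \<Rightarrow> 'y2 list \<Rightarrow> 'x2) g1 g2.
           restricted_encoder f1 \<and> restricted_encoder f2 \<and>
           error_prob P W m n f1 f2 g1 g2 < \<epsilon>))"

definition joint_dist ::
  "('q \<Rightarrow> real) \<Rightarrow> ('s1 \<times> 's2 \<Rightarrow> real) \<Rightarrow> ('q \<Rightarrow> 's1 \<Rightarrow> 'x1 \<Rightarrow> real) \<Rightarrow>
   ('q \<Rightarrow> 's2 \<Rightarrow> 'x2 \<Rightarrow> real) \<Rightarrow> ('x1 \<Rightarrow> 'x2 \<Rightarrow> ('y1 \<times> 'y2) \<Rightarrow> real) \<Rightarrow>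
   ('q \<times> 's1 \<times> 's2 \<times> 'x1 \<times> 'x2 \<times> 'y1 \<times> 'y2) \<Rightarrow> real" where
  "joint_dist pQ P V1 V2 W = (\<lambda>(q, s1, s2, x1, x2, y1, y2).
     pQ q * P (s1, s2) * V1 q s1 x1 * V2 q s2 x2 * W x1 x2 (y1, y2))"

end

theory Submission
  imports Defs "HOL-Library.FuncSet" "HOL-Analysis.Convex"
begin


definition LS :: "nat \<Rightarrow> 'a list set" where "LS n = {xs. length xs = n}"

lemma finite_LS[simp]: "finite (LS n :: ('a::finite) list set)"
  unfolding LS_def using finite_lists_length_eq[of "UNIV::'a set" n] by simp

lemma LS_Suc: "LS (Suc n) = (\<lambda>(x,xs). x # xs) ` (UNIV \<times> LS n)"
  unfolding LS_def by (auto simp: length_Suc_conv image_def)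

lemma sum_LS_prod:
  fixes f :: "nat \<Rightarrow> 'a::finite \<Rightarrow> 'c::comm_semiring_1"
  shows "(\<Sum>xs\<in>LS n. \<Prod>j<n. f j (xs!j)) = (\<Prod>j<n. \<Sum>x\<in>UNIV. f j x)"
proof (induction n arbitrary: f)
  case 0
  then show ?case by (simp add: LS_def)
next
  case (Suc n)
  have inj: "inj_on (\<lambda>(x,xs). x # xs) (UNIV \<times> LS n)" by (auto simp: inj_on_def)
  have "(\<Sum>xs\<in>LS (Suc n). \<Prod>j<Suc n. f j (xs!j))
      = (\<Sum>(x,xs)\<in>UNIV \<times> LS n. \<Prod>j<Suc n. f j ((x#xs)!j))"
    unfolding LS_Suc by (subst sum.reindex[OF inj]) (simp add: case_prod_beta)
  also have "\<dots> = (\<Sum>x\<in>UNIV. \<Sum>xs\<in>LS n. f 0 x * (\<Prod>j<n. f (Suc j) (xs!j)))"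
    by (subst sum.cartesian_product[symmetric]) (simp add: prod.lessThan_Suc_shift del: prod.lessThan_Suc)
  also have "\<dots> = (\<Sum>x\<in>UNIV. f 0 x) * (\<Prod>j<n. \<Sum>x\<in>UNIV. f (Suc j) x)"
    unfolding sum_distrib_left[symmetric] Suc.IH[of "\<lambda>j. f (Suc j)"] by (simp add: sum_distrib_right)
  also have "\<dots> = (\<Prod>j<Suc n. \<Sum>x\<in>UNIV. f j x)"
    by (simp only: prod.lessThan_Suc_shift)
  finally show ?case .
qed

lemma sum_UNIV_prod: "(\<Sum>w\<in>(UNIV::('a::finite\<times>'b::finite) set). g w) = (\<Sum>a\<in>UNIV. \<Sum>b\<in>UNIV. g (a,b))"
  by (simp add: sum.cartesian_product UNIV_Times_UNIV[symmetric] del: UNIV_Times_UNIV)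

lemma sum_PiE_marg:
  fixes \<mu> :: "'a \<Rightarrow> 'b \<Rightarrow> real"
  assumes A: "finite A" and B: "finite B" and a0: "a0 \<in> A"
    and one: "\<And>a. a \<in> A \<Longrightarrow> (\<Sum>b\<in>B. \<mu> a b) = 1"
  shows "(\<Sum>c\<in>PiE A (\<lambda>_. B). (\<Prod>a\<in>A. \<mu> a (c a)) * \<phi> (c a0)) = (\<Sum>b\<in>B. \<mu> a0 b * \<phi> b)"
proof -
  define f where "f a b = \<mu> a b * (if a = a0 then \<phi> b else 1)" for a b
  have "(\<Prod>a\<in>A. \<Sum>b\<in>B. f a b) = (\<Sum>c\<in>PiE A (\<lambda>_. B). \<Prod>a\<in>A. f a (c a))"
    by (rule prod_sum_PiE) (use A B in auto)
  moreover have "(\<Prod>a\<in>A. \<Sum>b\<in>B. f a b) = (\<Sum>b\<in>B. \<mu> a0 b * \<phi> b)"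
  proof -
    have "(\<Prod>a\<in>A. \<Sum>b\<in>B. f a b) = (\<Sum>b\<in>B. f a0 b) * (\<Prod>a\<in>A-{a0}. \<Sum>b\<in>B. f a b)"
      using A a0 by (simp add: prod.remove)
    also have "(\<Prod>a\<in>A-{a0}. \<Sum>b\<in>B. f a b) = 1"
      by (rule prod.neutral) (auto simp: f_def one)
    finally show ?thesis by (simp add: f_def)
  qed
  moreover have "\<And>c. (\<Prod>a\<in>A. f a (c a)) = (\<Prod>a\<in>A. \<mu> a (c a)) * \<phi> (c a0)"
  proof -
    fix c
    have "(\<Prod>a\<in>A. f a (c a)) = (\<Prod>a\<in>A. \<mu> a (c a)) * (\<Prod>a\<in>A. if a = a0 then \<phi> (c a) else 1)"
      by (simp add: f_def prod.distrib)
    also have "(\<Prod>a\<in>A. if a = a0 then \<phi> (c a) else 1) = \<phi> (c a0)"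
      using A a0 by (simp add: prod.delta)
    finally show "(\<Prod>a\<in>A. f a (c a)) = (\<Prod>a\<in>A. \<mu> a (c a)) * \<phi> (c a0)" .
  qed
  ultimately show ?thesis by simp
qed

lemma sum_PiE_one:
  fixes \<mu> :: "'a \<Rightarrow> 'b \<Rightarrow> real"
  assumes A: "finite A" and B: "finite B"
    and one: "\<And>a. a \<in> A \<Longrightarrow> (\<Sum>b\<in>B. \<mu> a b) = 1"
  shows "(\<Sum>c\<in>PiE A (\<lambda>_. B). (\<Prod>a\<in>A. \<mu> a (c a))) = 1"
proof -
  have "(\<Prod>a\<in>A. \<Sum>b\<in>B. \<mu> a b) = (\<Sum>c\<in>PiE A (\<lambda>_. B). \<Prod>a\<in>A. \<mu> a (c a))"
    by (rule prod_sum_PiE) (use A B in auto)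
  moreover have "(\<Prod>a\<in>A. \<Sum>b\<in>B. \<mu> a b) = 1" by (rule prod.neutral) (simp add: one)
  ultimately show ?thesis by simp
qed

lemma sum_PiE_lin:
  fixes \<mu> :: "'a \<Rightarrow> 'b \<Rightarrow> real"
  assumes A: "finite A" and B: "finite B" and S: "S \<subseteq> A"
    and one: "\<And>a. a \<in> A \<Longrightarrow> (\<Sum>b\<in>B. \<mu> a b) = 1"
  shows "(\<Sum>c\<in>PiE A (\<lambda>_. B). (\<Prod>a\<in>A. \<mu> a (c a)) * (\<Sum>a\<in>S. h a (c a)))
      = (\<Sum>a\<in>S. \<Sum>b\<in>B. \<mu> a b * h a b)"
proof -
  have "(\<Sum>c\<in>PiE A (\<lambda>_. B). (\<Prod>a\<in>A. \<mu> a (c a)) * (\<Sum>a\<in>S. h a (c a)))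
      = (\<Sum>a\<in>S. \<Sum>c\<in>PiE A (\<lambda>_. B). (\<Prod>a\<in>A. \<mu> a (c a)) * h a (c a))"
    by (simp add: sum_distrib_left sum.swap[of _ S])
  also have "\<dots> = (\<Sum>a\<in>S. \<Sum>b\<in>B. \<mu> a b * h a b)"
    by (rule sum.cong[OF refl], rule sum_PiE_marg) (use A B S one in auto)
  finally show ?thesis .
qed

lemma jensen_powr:
  fixes w x :: "'i \<Rightarrow> real"
  assumes I: "finite I" and w: "\<And>i. i \<in> I \<Longrightarrow> w i \<ge> 0" and w1: "(\<Sum>i\<in>I. w i) = 1"
    and x: "\<And>i. i \<in> I \<Longrightarrow> x i \<ge> 0" and r: "0 < r" "r < 1"
  shows "(\<Sum>i\<in>I. w i * x i powr r) \<le> (\<Sum>i\<in>I. w i * x i) powr r"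
proof -
  define M where "M = (\<Sum>i\<in>I. w i * x i)"
  have M0: "M \<ge> 0" unfolding M_def using w x by (intro sum_nonneg) auto
  show ?thesis
  proof (cases "M = 0")
    case True
    have "\<forall>i\<in>I. w i * x i = 0"
      using True I w x unfolding M_def by (subst sum_nonneg_eq_0_iff[symmetric]) auto
    then have z: "\<forall>i\<in>I. w i * x i powr r = 0" by auto
    have "(\<Sum>i\<in>I. w i * x i powr r) = 0" using z by (intro sum.neutral) blast
    then show ?thesis using True unfolding M_def by simp
  next
    case False
    then have Mp: "M > 0" using M0 by simp
    have key: "x i powr r \<le> M powr r * (r * (x i / M) + (1 - r))" if i: "i \<in> I" for i
    proof (cases "x i = 0")
      case True then show ?thesis using r Mp by simp
    next
      case False
      then have xp: "x i / M > 0" using x[OF i] Mp by simp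
      have "(x i / M) powr r * 1 powr (1 - r) \<le> r * (x i / M) + (1 - r) * 1"
        by (rule Youngs_inequality_0) (use r xp in auto)
      then have "x i powr r / M powr r \<le> r * (x i / M) + (1 - r)"
        using x[OF i] Mp by (simp add: powr_divide)
      then show ?thesis using Mp by (simp add: divide_le_eq mult.commute)
    qed
    have "(\<Sum>i\<in>I. w i * x i powr r) \<le> (\<Sum>i\<in>I. w i * (M powr r * (r * (x i / M) + (1 - r))))"
      by (rule sum_mono) (use key w in \<open>auto intro: mult_left_mono\<close>)
    also have "\<dots> = (\<Sum>i\<in>I. (M powr r * (r / M)) * (w i * x i) + (M powr r * (1 - r)) * w i)"
      by (rule sum.cong) (simp_all add: algebra_simps)
    also have "\<dots> = (M powr r * (r / M)) * (\<Sum>i\<in>I. w i * x i) + (M powr r * (1 - r)) * (\<Sum>i\<in>I. w i)"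
      by (simp only: sum.distrib sum_distrib_left)
    also have "\<dots> = M powr r" using Mp w1 by (simp add: M_def[symmetric] field_simps)
    finally show ?thesis by (simp add: M_def)
  qed
qed

lemma sum_PiE_jensen:
  fixes \<mu> :: "'a \<Rightarrow> 'b \<Rightarrow> real"
  assumes A: "finite A" and B: "finite B" and a0: "a0 \<in> A"
    and mu: "\<And>a b. 0 \<le> \<mu> a b"
    and one: "\<And>a. a \<in> A \<Longrightarrow> (\<Sum>b\<in>B. \<mu> a b) = 1"
    and F: "\<And>b. 0 \<le> F b" and h: "\<And>a b. 0 \<le> h a b" and r: "0 < r" "r < 1"
  shows "(\<Sum>c\<in>PiE A (\<lambda>_. B). (\<Prod>a\<in>A. \<mu> a (c a)) * (F (c a0) * (\<Sum>a\<in>A-{a0}. h a (c a)) powr r))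
      \<le> (\<Sum>b\<in>B. \<mu> a0 b * F b) * (\<Sum>a\<in>A. \<Sum>b\<in>B. \<mu> a b * h a b) powr r"
proof -
  define A' where "A' = A - {a0}"
  have AA: "A = insert a0 A'" and a0A': "a0 \<notin> A'" and fA': "finite A'" using a0 A by (auto simp: A'_def)
  define w where "w g = (\<Prod>a\<in>A'. \<mu> a (g a))" for g
  define S where "S g = (\<Sum>a\<in>A'. h a (g a))" for g
  define G where "G c = (\<Prod>a\<in>A. \<mu> a (c a)) * (F (c a0) * (\<Sum>a\<in>A-{a0}. h a (c a)) powr r)" for c
  have "(\<Sum>c\<in>PiE A (\<lambda>_. B). G c) = (\<Sum>(y,g)\<in>B \<times> PiE A' (\<lambda>_. B). G (g(a0:=y)))"
    unfolding AA PiE_insert_eq by (subst sum.reindex[OF inj_combinator[OF a0A']]) (simp add: case_prod_beta)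
  also have "\<dots> = (\<Sum>(y,g)\<in>B \<times> PiE A' (\<lambda>_. B). (\<mu> a0 y * F y) * (w g * S g powr r))"
  proof (rule sum.cong[OF refl], clarify)
    fix y g
    have p: "(\<Prod>a\<in>A. \<mu> a ((g(a0:=y)) a)) = \<mu> a0 y * w g"
      unfolding AA w_def using fA' a0A' by (auto intro!: prod.cong)
    have s: "(\<Sum>a\<in>A-{a0}. h a ((g(a0:=y)) a)) = S g"
      unfolding S_def A'_def by (rule sum.cong) auto
    show "G (g(a0:=y)) = (\<mu> a0 y * F y) * (w g * S g powr r)"
      unfolding G_def p s by simp
  qed
  also have "\<dots> = (\<Sum>b\<in>B. \<mu> a0 b * F b) * (\<Sum>g\<in>PiE A' (\<lambda>_. B). w g * S g powr r)"
    by (simp add: sum.cartesian_product[symmetric] sum_product)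
  also have "\<dots> \<le> (\<Sum>b\<in>B. \<mu> a0 b * F b) * (\<Sum>a\<in>A. \<Sum>b\<in>B. \<mu> a b * h a b) powr r"
  proof (rule mult_left_mono)
    show "0 \<le> (\<Sum>b\<in>B. \<mu> a0 b * F b)" using mu F by (intro sum_nonneg) auto
    have "(\<Sum>g\<in>PiE A' (\<lambda>_. B). w g * S g powr r) \<le> (\<Sum>g\<in>PiE A' (\<lambda>_. B). w g * S g) powr r"
    proof (rule jensen_powr)
      show "finite (PiE A' (\<lambda>_. B))" using fA' B by (simp add: finite_PiE)
      show "(\<Sum>g\<in>PiE A' (\<lambda>_. B). w g) = 1" unfolding w_def
        by (rule sum_PiE_one) (use fA' B one in \<open>auto simp: A'_def\<close>)
    qed (use r mu h in \<open>auto simp: w_def S_def intro!: prod_nonneg sum_nonneg\<close>)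
    also have "(\<Sum>g\<in>PiE A' (\<lambda>_. B). w g * S g) = (\<Sum>a\<in>A'. \<Sum>b\<in>B. \<mu> a b * h a b)"
      unfolding w_def S_def by (rule sum_PiE_lin) (use fA' B one in \<open>auto simp: A'_def\<close>)
    also have "\<dots> powr r \<le> (\<Sum>a\<in>A. \<Sum>b\<in>B. \<mu> a b * h a b) powr r"
    proof (rule powr_mono2)
      show "0 \<le> r" using r by simp
      show "0 \<le> (\<Sum>a\<in>A'. \<Sum>b\<in>B. \<mu> a b * h a b)" using mu h by (intro sum_nonneg mult_nonneg_nonneg) auto
      show "(\<Sum>a\<in>A'. \<Sum>b\<in>B. \<mu> a b * h a b) \<le> (\<Sum>a\<in>A. \<Sum>b\<in>B. \<mu> a b * h a b)"
        using A mu h by (intro sum_mono2) (auto simp: A'_def intro!: sum_nonneg)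
    qed
    finally show "(\<Sum>g\<in>PiE A' (\<lambda>_. B). w g * S g powr r) \<le> (\<Sum>a\<in>A. \<Sum>b\<in>B. \<mu> a b * h a b) powr r" .
  qed
  finally show ?thesis unfolding G_def .
qed

lemma swap3:
  fixes w :: "'c \<Rightarrow> real"
  shows "(\<Sum>c\<in>C. w c * (\<Sum>a\<in>A. \<Sum>b\<in>B. \<Sum>d\<in>D. T c a b d)) = (\<Sum>a\<in>A. \<Sum>b\<in>B. \<Sum>d\<in>D. \<Sum>c\<in>C. w c * T c a b d)"
proof -
  have "(\<Sum>c\<in>C. w c * (\<Sum>a\<in>A. \<Sum>b\<in>B. \<Sum>d\<in>D. T c a b d)) = (\<Sum>c\<in>C. \<Sum>a\<in>A. \<Sum>b\<in>B. \<Sum>d\<in>D. w c * T c a b d)"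
    by (simp add: sum_distrib_left)
  also have "\<dots> = (\<Sum>a\<in>A. \<Sum>c\<in>C. \<Sum>b\<in>B. \<Sum>d\<in>D. w c * T c a b d)" by (rule sum.swap)
  also have "\<dots> = (\<Sum>a\<in>A. \<Sum>b\<in>B. \<Sum>c\<in>C. \<Sum>d\<in>D. w c * T c a b d)" by (rule sum.cong[OF refl], rule sum.swap)
  also have "\<dots> = (\<Sum>a\<in>A. \<Sum>b\<in>B. \<Sum>d\<in>D. \<Sum>c\<in>C. w c * T c a b d)" by (rule sum.cong[OF refl], rule sum.cong[OF refl], rule sum.swap)
  finally show ?thesis .
qed

lemma swap1:
  fixes w :: "'c \<Rightarrow> real"
  shows "(\<Sum>c\<in>C. w c * (\<Sum>d\<in>D. v d * T c d)) = (\<Sum>d\<in>D. v d * (\<Sum>c\<in>C. w c * T c d))"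
proof -
  have "(\<Sum>c\<in>C. w c * (\<Sum>d\<in>D. v d * T c d)) = (\<Sum>c\<in>C. \<Sum>d\<in>D. v d * (w c * T c d))"
    by (simp add: sum_distrib_left mult.left_commute)
  also have "\<dots> = (\<Sum>d\<in>D. \<Sum>c\<in>C. v d * (w c * T c d))" by (rule sum.swap)
  also have "\<dots> = (\<Sum>d\<in>D. v d * (\<Sum>c\<in>C. w c * T c d))" by (simp only: sum_distrib_left)
  finally show ?thesis .
qed

lemma sum_LS_prod2:
  fixes f :: "nat \<Rightarrow> 'a::finite \<Rightarrow> 'b::finite \<Rightarrow> 'c::comm_semiring_1"
  shows "(\<Sum>a\<in>LS n. \<Sum>b\<in>LS n. \<Prod>j<n. f j (a!j) (b!j)) = (\<Prod>j<n. \<Sum>a\<in>UNIV. \<Sum>b\<in>UNIV. f j a b)"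
proof -
  have "(\<Sum>a\<in>LS n. \<Sum>b\<in>LS n. \<Prod>j<n. f j (a!j) (b!j)) = (\<Sum>a\<in>LS n. \<Prod>j<n. \<Sum>b\<in>UNIV. f j (a!j) b)"
    by (rule sum.cong[OF refl], rule sum_LS_prod[of "\<lambda>j x. f j (_!j) x"])
  also have "\<dots> = (\<Prod>j<n. \<Sum>a\<in>UNIV. \<Sum>b\<in>UNIV. f j a b)"
    by (rule sum_LS_prod[of "\<lambda>j a. \<Sum>b\<in>UNIV. f j a b"])
  finally show ?thesis .
qed

lemma sum_LS_prod3:
  fixes f :: "nat \<Rightarrow> 'a::finite \<Rightarrow> 'b::finite \<Rightarrow> 'd::finite \<Rightarrow> 'c::comm_semiring_1"
  shows "(\<Sum>a\<in>LS n. \<Sum>b\<in>LS n. \<Sum>c\<in>LS n. \<Prod>j<n. f j (a!j) (b!j) (c!j)) = (\<Prod>j<n. \<Sum>a\<in>UNIV. \<Sum>b\<in>UNIV. \<Sum>c\<in>UNIV. f j a b c)"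
proof -
  have "(\<Sum>a\<in>LS n. \<Sum>b\<in>LS n. \<Sum>c\<in>LS n. \<Prod>j<n. f j (a!j) (b!j) (c!j)) = (\<Sum>a\<in>LS n. \<Prod>j<n. \<Sum>b\<in>UNIV. \<Sum>c\<in>UNIV. f j (a!j) b c)"
    by (rule sum.cong[OF refl], rule sum_LS_prod2[of "\<lambda>j x y. f j (_!j) x y"])
  also have "\<dots> = (\<Prod>j<n. \<Sum>a\<in>UNIV. \<Sum>b\<in>UNIV. \<Sum>c\<in>UNIV. f j a b c)"
    by (rule sum_LS_prod[of "\<lambda>j a. \<Sum>b\<in>UNIV. \<Sum>c\<in>UNIV. f j a b c"])
  finally show ?thesis .
qed

lemma sum_LS_prod4:
  fixes f :: "nat \<Rightarrow> 'a::finite \<Rightarrow> 'b::finite \<Rightarrow> 'd::finite \<Rightarrow> 'e::finite \<Rightarrow> 'c::comm_semiring_1"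
  shows "(\<Sum>a\<in>LS n. \<Sum>b\<in>LS n. \<Sum>c\<in>LS n. \<Sum>d\<in>LS n. \<Prod>j<n. f j (a!j) (b!j) (c!j) (d!j)) = (\<Prod>j<n. \<Sum>a\<in>UNIV. \<Sum>b\<in>UNIV. \<Sum>c\<in>UNIV. \<Sum>d\<in>UNIV. f j a b c d)"
proof -
  have "(\<Sum>a\<in>LS n. \<Sum>b\<in>LS n. \<Sum>c\<in>LS n. \<Sum>d\<in>LS n. \<Prod>j<n. f j (a!j) (b!j) (c!j) (d!j)) = (\<Sum>a\<in>LS n. \<Prod>j<n. \<Sum>b\<in>UNIV. \<Sum>c\<in>UNIV. \<Sum>d\<in>UNIV. f j (a!j) b c d)"
    by (rule sum.cong[OF refl], rule sum_LS_prod3[of "\<lambda>j x y z. f j (_!j) x y z"])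
  also have "\<dots> = (\<Prod>j<n. \<Sum>a\<in>UNIV. \<Sum>b\<in>UNIV. \<Sum>c\<in>UNIV. \<Sum>d\<in>UNIV. f j a b c d)"
    by (rule sum_LS_prod[of "\<lambda>j a. \<Sum>b\<in>UNIV. \<Sum>c\<in>UNIV. \<Sum>d\<in>UNIV. f j a b c d"])
  finally show ?thesis .
qed



locale blk =
  fixes pQ :: "'q::finite \<Rightarrow> real" and PP :: "'a::finite \<Rightarrow> 'b::finite \<Rightarrow> real"
    and Va :: "'q \<Rightarrow> 'a \<Rightarrow> 'xa::finite \<Rightarrow> real" and Vb :: "'q \<Rightarrow> 'b \<Rightarrow> 'xb::finite \<Rightarrow> real"
    and Wb :: "'xa \<Rightarrow> 'xb \<Rightarrow> 'yb::finite \<Rightarrow> real"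
  assumes pQ: "is_pmf pQ" and Va: "\<And>q a. is_pmf (Va q a)" and Vb: "\<And>q b. is_pmf (Vb q b)"
    and PP0: "\<And>a b. 0 \<le> PP a b" and Wb0: "\<And>xa xb y. 0 \<le> Wb xa xb y"
begin

definition "PPn n sa sb = (\<Prod>j<n. PP (sa!j) (sb!j))"
definition "Wbn n xa xb yb = (\<Prod>j<n. Wb (xa!j) (xb!j) (yb!j))"
definition "Lx n sb yb xb s x = PPn n s sb * Wbn n x xb yb"
definition "dec n ca cb yb sb = (SOME s. s \<in> LS n \<and> (\<forall>s'\<in>LS n. Lx n sb yb (cb sb) s' (ca s') \<le> Lx n sb yb (cb sb) s (ca s)))"
definition "Err n ca cb = (\<Sum>sa\<in>LS n. \<Sum>sb\<in>LS n. \<Sum>yb\<in>LS n.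
   Lx n sb yb (cb sb) sa (ca sa) * (if dec n ca cb yb sb \<noteq> sa then 1 else 0))"
definition "Van n q s x = (\<Prod>j<n. Va (q!j) (s!j) (x!j))"
definition "Vbn n q s x = (\<Prod>j<n. Vb (q!j) (s!j) (x!j))"
definition "wQ n q = (\<Prod>j<n. pQ (q!j))"
definition "wA n q ca = (\<Prod>s\<in>LS n. Van n q s (ca s))"
definition "wB n q cb = (\<Prod>s\<in>LS n. Vbn n q s (cb s))"
definition "Avg n = (\<Sum>q\<in>LS n. wQ n q * (\<Sum>ca\<in>PiE (LS n) (\<lambda>_. LS n). wA n q ca *
    (\<Sum>cb\<in>PiE (LS n) (\<lambda>_. LS n). wB n q cb * Err n ca cb)))"
definition "alpha r q a b y xb = (\<Sum>xa\<in>UNIV. Va q a xa * (PP a b * Wb xa xb y) powr (1-r))"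
definition "beta q b y xb = (\<Sum>a'\<in>UNIV. \<Sum>x'\<in>UNIV. Va q a' x' * PP a' b * Wb x' xb y)"
definition "ee r = (\<Sum>q\<in>UNIV. pQ q * (\<Sum>a\<in>UNIV. \<Sum>b\<in>UNIV. \<Sum>y\<in>UNIV. \<Sum>xb\<in>UNIV.
   Vb q b xb * (alpha r q a b y xb * beta q b y xb powr r)))"

lemma Va0: "0 \<le> Va q a x" using Va unfolding is_pmf_def by auto
lemma Vb0: "0 \<le> Vb q a x" using Vb unfolding is_pmf_def by auto
lemma pQ0: "0 \<le> pQ q" using pQ unfolding is_pmf_def by auto

lemma Van0: "0 \<le> Van n q s x" unfolding Van_def by (intro prod_nonneg) (auto simp: Va0)
lemma Vbn0: "0 \<le> Vbn n q s x" unfolding Vbn_def by (intro prod_nonneg) (auto simp: Vb0)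
lemma Lx0: "0 \<le> Lx n sb yb xb s x" unfolding Lx_def PPn_def Wbn_def
  by (intro mult_nonneg_nonneg prod_nonneg) (auto simp: PP0 Wb0)

lemma Van1: "(\<Sum>x\<in>LS n. Van n q s x) = 1"
  unfolding Van_def using sum_LS_prod[of "\<lambda>j x. Va (q!j) (s!j) x" n] Va by (simp add: is_pmf_def)
lemma Vbn1: "(\<Sum>x\<in>LS n. Vbn n q s x) = 1"
  unfolding Vbn_def using sum_LS_prod[of "\<lambda>j x. Vb (q!j) (s!j) x" n] Vb by (simp add: is_pmf_def)

lemma LS_ne: "LS n \<noteq> {}"
  unfolding LS_def by (auto intro!: exI[of _ "replicate n undefined"])

lemma dec_spec:
  "dec n ca cb yb sb \<in> LS n \<and> (\<forall>s'\<in>LS n. Lx n sb yb (cb sb) s' (ca s') \<le> Lx n sb yb (cb sb) (dec n ca cb yb sb) (ca (dec n ca cb yb sb)))"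
proof -
  define f where "f s = Lx n sb yb (cb sb) s (ca s)" for s
  have "Max (f ` LS n) \<in> f ` LS n" using LS_ne by (intro Max_in) auto
  then obtain s where s: "s \<in> LS n" "f s = Max (f ` LS n)" by auto
  have "\<forall>s'\<in>LS n. f s' \<le> f s" using s by auto
  then have "\<exists>s. s \<in> LS n \<and> (\<forall>s'\<in>LS n. f s' \<le> f s)" using s by blast
  then show ?thesis unfolding dec_def f_def by (rule someI_ex)
qed

lemma err_pointwise:
  assumes sa: "sa \<in> LS n" and r: "0 < r" "r < 1"
  shows "Lx n sb yb (cb sb) sa (ca sa) * (if dec n ca cb yb sb \<noteq> sa then 1 else 0)
    \<le> Lx n sb yb (cb sb) sa (ca sa) powr (1-r) * (\<Sum>s\<in>LS n - {sa}. Lx n sb yb (cb sb) s (ca s)) powr r"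
proof (cases "dec n ca cb yb sb \<noteq> sa")
  case True
  define f where "f s = Lx n sb yb (cb sb) s (ca s)" for s
  define d where "d = dec n ca cb yb sb"
  have d: "d \<in> LS n - {sa}" using dec_spec True by (auto simp: d_def)
  have "f sa \<le> f d" using dec_spec sa unfolding f_def d_def by blast
  also have "f d \<le> (\<Sum>s\<in>LS n - {sa}. f s)"
    using d by (intro member_le_sum) (auto simp: f_def Lx0)
  finally have le: "f sa \<le> (\<Sum>s\<in>LS n - {sa}. f s)" .
  have f0: "0 \<le> f sa" by (simp add: f_def Lx0)
  show ?thesis
  proof (cases "f sa = 0")
    case True then show ?thesis by (simp add: f_def)
  next
    case False
    then have fp: "f sa > 0" using f0 by simp
    have "f sa = f sa powr (1-r) * f sa powr r" using fp by (simp add: powr_add[symmetric])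
    also have "\<dots> \<le> f sa powr (1-r) * (\<Sum>s\<in>LS n - {sa}. f s) powr r"
      using le f0 r by (intro mult_left_mono powr_mono2) auto
    finally show ?thesis using True by (simp add: f_def)
  qed
qed (simp add: Lx0)

definition "Rb n r q sa sb yb xb = (\<Sum>x\<in>LS n. Van n q sa x * Lx n sb yb xb sa x powr (1-r)) *
   (\<Sum>s\<in>LS n. \<Sum>x\<in>LS n. Van n q s x * Lx n sb yb xb s x) powr r"

lemma code_avg:
  assumes sa: "sa \<in> LS n" and r: "0 < r" "r < 1"
  shows "(\<Sum>ca\<in>PiE (LS n) (\<lambda>_. LS n). wA n q ca * (Lx n sb yb (cb sb) sa (ca sa) powr (1-r) *
      (\<Sum>s\<in>LS n - {sa}. Lx n sb yb (cb sb) s (ca s)) powr r)) \<le> Rb n r q sa sb yb (cb sb)"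
  unfolding wA_def Rb_def
  by (rule sum_PiE_jensen[where \<mu>="Van n q" and F="\<lambda>x. Lx n sb yb (cb sb) sa x powr (1-r)"
        and h="\<lambda>s x. Lx n sb yb (cb sb) s x"]) (use sa r in \<open>auto simp: Van0 Van1 Lx0\<close>)

lemma Rb0: "0 \<le> Rb n r q sa sb yb xb"
  unfolding Rb_def by (intro mult_nonneg_nonneg sum_nonneg) (auto simp: Van0 Lx0)

lemma avg_q:
  assumes r: "0 < r" "r < 1"
  shows "(\<Sum>ca\<in>PiE (LS n) (\<lambda>_. LS n). wA n q ca * (\<Sum>cb\<in>PiE (LS n) (\<lambda>_. LS n). wB n q cb * Err n ca cb))
    \<le> (\<Sum>sa\<in>LS n. \<Sum>sb\<in>LS n. \<Sum>yb\<in>LS n. \<Sum>xb\<in>LS n. Vbn n q sb xb * Rb n r q sa sb yb xb)"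
proof -
  let ?C = "PiE (LS n) (\<lambda>_. LS n)"
  have wA0: "0 \<le> wA n q ca" for ca unfolding wA_def by (intro prod_nonneg) (auto simp: Van0)
  have wB0: "0 \<le> wB n q cb" for cb unfolding wB_def by (intro prod_nonneg) (auto simp: Vbn0)
  have "(\<Sum>ca\<in>?C. wA n q ca * (\<Sum>cb\<in>?C. wB n q cb * Err n ca cb))
      = (\<Sum>cb\<in>?C. wB n q cb * (\<Sum>ca\<in>?C. wA n q ca * Err n ca cb))"
    by (rule swap1)
  also have "\<dots> \<le> (\<Sum>cb\<in>?C. wB n q cb * (\<Sum>sa\<in>LS n. \<Sum>sb\<in>LS n. \<Sum>yb\<in>LS n. Rb n r q sa sb yb (cb sb)))"
  proof (rule sum_mono, rule mult_left_mono[OF _ wB0])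
    fix cb
    have "(\<Sum>ca\<in>?C. wA n q ca * Err n ca cb) \<le> (\<Sum>ca\<in>?C. wA n q ca * (\<Sum>sa\<in>LS n. \<Sum>sb\<in>LS n. \<Sum>yb\<in>LS n.
        Lx n sb yb (cb sb) sa (ca sa) powr (1-r) * (\<Sum>s\<in>LS n - {sa}. Lx n sb yb (cb sb) s (ca s)) powr r))"
      unfolding Err_def
      by (intro sum_mono mult_left_mono[OF _ wA0] err_pointwise r) 
    also have "\<dots> = (\<Sum>sa\<in>LS n. \<Sum>sb\<in>LS n. \<Sum>yb\<in>LS n. \<Sum>ca\<in>?C. wA n q ca *
        (Lx n sb yb (cb sb) sa (ca sa) powr (1-r) * (\<Sum>s\<in>LS n - {sa}. Lx n sb yb (cb sb) s (ca s)) powr r))"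
      by (rule swap3)
    also have "\<dots> \<le> (\<Sum>sa\<in>LS n. \<Sum>sb\<in>LS n. \<Sum>yb\<in>LS n. Rb n r q sa sb yb (cb sb))"
      by (intro sum_mono code_avg r)
    finally show "(\<Sum>ca\<in>?C. wA n q ca * Err n ca cb) \<le> (\<Sum>sa\<in>LS n. \<Sum>sb\<in>LS n. \<Sum>yb\<in>LS n. Rb n r q sa sb yb (cb sb))" .
  qed
  also have "\<dots> = (\<Sum>sa\<in>LS n. \<Sum>sb\<in>LS n. \<Sum>yb\<in>LS n. \<Sum>cb\<in>?C. wB n q cb * Rb n r q sa sb yb (cb sb))"
    by (rule swap3)
  also have "\<dots> = (\<Sum>sa\<in>LS n. \<Sum>sb\<in>LS n. \<Sum>yb\<in>LS n. \<Sum>xb\<in>LS n. Vbn n q sb xb * Rb n r q sa sb yb xb)"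
    unfolding wB_def by (intro sum.cong refl sum_PiE_marg) (auto simp: Vbn1)
  finally show ?thesis .
qed

lemma Rb_fact:
  "Rb n r q sa sb yb xb = (\<Prod>j<n. alpha r (q!j) (sa!j) (sb!j) (yb!j) (xb!j) * beta (q!j) (sb!j) (yb!j) (xb!j) powr r)"
proof -
  have a1: "(\<Sum>x\<in>LS n. Van n q sa x * Lx n sb yb xb sa x powr (1-r))
      = (\<Sum>x\<in>LS n. \<Prod>j<n. Va (q!j) (sa!j) (x!j) * (PP (sa!j) (sb!j) * Wb (x!j) (xb!j) (yb!j)) powr (1-r))"
    by (rule sum.cong[OF refl]) (simp add: Van_def Lx_def PPn_def Wbn_def prod.distrib prod_powr_distrib powr_mult)
  also have "\<dots> = (\<Prod>j<n. alpha r (q!j) (sa!j) (sb!j) (yb!j) (xb!j))"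
    unfolding alpha_def
    by (rule sum_LS_prod[of "\<lambda>j x. Va (q!j) (sa!j) x * (PP (sa!j) (sb!j) * Wb x (xb!j) (yb!j)) powr (1-r)"])
  finally have a: "(\<Sum>x\<in>LS n. Van n q sa x * Lx n sb yb xb sa x powr (1-r)) = (\<Prod>j<n. alpha r (q!j) (sa!j) (sb!j) (yb!j) (xb!j))" .
  have "(\<Sum>s\<in>LS n. \<Sum>x\<in>LS n. Van n q s x * Lx n sb yb xb s x)
      = (\<Sum>s\<in>LS n. \<Sum>x\<in>LS n. \<Prod>j<n. Va (q!j) (s!j) (x!j) * PP (s!j) (sb!j) * Wb (x!j) (xb!j) (yb!j))"
    by (intro sum.cong refl) (simp add: Van_def Lx_def PPn_def Wbn_def prod.distrib)
  also have "\<dots> = (\<Prod>j<n. beta (q!j) (sb!j) (yb!j) (xb!j))"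
    unfolding beta_def
    by (rule sum_LS_prod2[of "\<lambda>j a x. Va (q!j) a x * PP a (sb!j) * Wb x (xb!j) (yb!j)"])
  finally have b: "(\<Sum>s\<in>LS n. \<Sum>x\<in>LS n. Van n q s x * Lx n sb yb xb s x) = (\<Prod>j<n. beta (q!j) (sb!j) (yb!j) (xb!j))" .
  show ?thesis unfolding Rb_def a b by (simp add: prod_powr_distrib prod.distrib)
qed

lemma avg_fact:
  "(\<Sum>q\<in>LS n. wQ n q * (\<Sum>sa\<in>LS n. \<Sum>sb\<in>LS n. \<Sum>yb\<in>LS n. \<Sum>xb\<in>LS n. Vbn n q sb xb * Rb n r q sa sb yb xb))
   = ee r ^ n"
proof -
  define \<psi> where "\<psi> q = (\<Sum>a\<in>UNIV. \<Sum>b\<in>UNIV. \<Sum>y\<in>UNIV. \<Sum>xb\<in>UNIV.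
     Vb q b xb * (alpha r q a b y xb * beta q b y xb powr r))" for q
  have inner: "(\<Sum>sa\<in>LS n. \<Sum>sb\<in>LS n. \<Sum>yb\<in>LS n. \<Sum>xb\<in>LS n. Vbn n q sb xb * Rb n r q sa sb yb xb)
      = (\<Prod>j<n. \<psi> (q!j))" for q
  proof -
    have "(\<Sum>sa\<in>LS n. \<Sum>sb\<in>LS n. \<Sum>yb\<in>LS n. \<Sum>xb\<in>LS n. Vbn n q sb xb * Rb n r q sa sb yb xb)
      = (\<Sum>sa\<in>LS n. \<Sum>sb\<in>LS n. \<Sum>yb\<in>LS n. \<Sum>xb\<in>LS n. \<Prod>j<n. Vb (q!j) (sb!j) (xb!j) *
          (alpha r (q!j) (sa!j) (sb!j) (yb!j) (xb!j) * beta (q!j) (sb!j) (yb!j) (xb!j) powr r))"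
      by (intro sum.cong refl) (simp add: Rb_fact Vbn_def prod.distrib)
    also have "\<dots> = (\<Prod>j<n. \<psi> (q!j))" unfolding \<psi>_def
      by (rule sum_LS_prod4[of "\<lambda>j a b y x. Vb (q!j) b x * (alpha r (q!j) a b y x * beta (q!j) b y x powr r)"])
    finally show ?thesis .
  qed
  have "(\<Sum>q\<in>LS n. wQ n q * (\<Sum>sa\<in>LS n. \<Sum>sb\<in>LS n. \<Sum>yb\<in>LS n. \<Sum>xb\<in>LS n. Vbn n q sb xb * Rb n r q sa sb yb xb))
      = (\<Sum>q\<in>LS n. \<Prod>j<n. pQ (q!j) * \<psi> (q!j))"
    by (intro sum.cong refl) (simp add: inner wQ_def prod.distrib)
  also have "\<dots> = (\<Prod>j<n. \<Sum>q\<in>UNIV. pQ q * \<psi> q)"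
    by (rule sum_LS_prod[of "\<lambda>j q. pQ q * \<psi> q"])
  also have "\<dots> = ee r ^ n" by (simp add: ee_def \<psi>_def)
  finally show ?thesis .
qed

lemma avg_bound:
  assumes r: "0 < r" "r < 1"
  shows "Avg n \<le> ee r ^ n"
proof -
  have "Avg n \<le> (\<Sum>q\<in>LS n. wQ n q * (\<Sum>sa\<in>LS n. \<Sum>sb\<in>LS n. \<Sum>yb\<in>LS n. \<Sum>xb\<in>LS n. Vbn n q sb xb * Rb n r q sa sb yb xb))"
    unfolding Avg_def
    by (intro sum_mono mult_left_mono avg_q r) (auto simp: wQ_def pQ0 intro!: prod_nonneg)
  also have "\<dots> = ee r ^ n" by (rule avg_fact)
  finally show ?thesis .
qed

lemma term_eq:
  fixes p m \<beta> r :: real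
  assumes "0 \<le> p" "0 \<le> m" "r < 1" "p * m > 0 \<Longrightarrow> \<beta> > 0"
  shows "p * (m powr (1-r) * \<beta> powr r) = (if p * m > 0 then p * m * exp (r * (ln \<beta> - ln m)) else 0)"
proof (cases "p * m > 0")
  case True
  then have pm: "p > 0" "m > 0" using assms by (auto simp: zero_less_mult_iff)
  have b: "\<beta> > 0" using assms True by auto
  have "m powr (1-r) * \<beta> powr r = exp ((1-r) * ln m) * exp (r * ln \<beta>)"
    using pm b by (simp add: powr_def)
  also have "\<dots> = m * exp (r * (ln \<beta> - ln m))"
    using pm by (simp add: exp_add[symmetric] algebra_simps exp_diff)
  finally show ?thesis using True by simp
next
  case False
  then have "p = 0 \<or> m = 0" using assms by (auto simp: zero_less_mult_iff less_le)
  then show ?thesis using False assms by auto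
qed

definition "cc q a b y xb xa = (pQ q * Vb q b xb * Va q a xa) * (PP a b * Wb xa xb y)"
definition "dd q a b y xb xa = ln (beta q b y xb) - ln (PP a b * Wb xa xb y)"
definition "gg r = (\<Sum>q\<in>UNIV. \<Sum>a\<in>UNIV. \<Sum>b\<in>UNIV. \<Sum>y\<in>UNIV. \<Sum>xb\<in>UNIV. \<Sum>xa\<in>UNIV.
   cc q a b y xb xa * exp (r * dd q a b y xb xa))"

lemma cc0: "0 \<le> cc q a b y xb xa" unfolding cc_def by (simp add: pQ0 Vb0 Va0 PP0 Wb0)

lemma ee_gg:
  assumes r: "r < 1"
  shows "ee r = gg r"
proof -
  have "ee r = (\<Sum>q\<in>UNIV. \<Sum>a\<in>UNIV. \<Sum>b\<in>UNIV. \<Sum>y\<in>UNIV. \<Sum>xb\<in>UNIV. \<Sum>xa\<in>UNIV.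
     (pQ q * Vb q b xb * Va q a xa) * ((PP a b * Wb xa xb y) powr (1-r) * beta q b y xb powr r))"
    unfolding ee_def alpha_def by (simp add: sum_distrib_left sum_distrib_right mult_ac)
  also have "\<dots> = gg r" unfolding gg_def
  proof (intro sum.cong refl)
    fix q a b y xb xa
    have bb: "beta q b y xb \<ge> Va q a xa * PP a b * Wb xa xb y"
      unfolding beta_def
      by (rule order_trans[OF _ member_le_sum[of a]], rule member_le_sum[of xa])
         (auto intro!: sum_nonneg mult_nonneg_nonneg simp: Va0 PP0 Wb0)
    have "(pQ q * Vb q b xb * Va q a xa) * ((PP a b * Wb xa xb y) powr (1-r) * beta q b y xb powr r)
       = (if (pQ q * Vb q b xb * Va q a xa) * (PP a b * Wb xa xb y) > 0 then
          (pQ q * Vb q b xb * Va q a xa) * (PP a b * Wb xa xb y) * exp (r * (ln (beta q b y xb) - ln (PP a b * Wb xa xb y))) else 0)"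
    proof (rule term_eq)
      assume "(pQ q * Vb q b xb * Va q a xa) * (PP a b * Wb xa xb y) > 0"
      then have nz: "Va q a xa \<noteq> 0" "PP a b \<noteq> 0" "Wb xa xb y \<noteq> 0" by auto
      have "Va q a xa > 0" "PP a b > 0" "Wb xa xb y > 0"
        using nz Va0[of q a xa] PP0[of a b] Wb0[of xa xb y] by (auto simp: less_le)
      then have "Va q a xa * PP a b * Wb xa xb y > 0" by simp
      then show "beta q b y xb > 0" using bb by linarith
    qed (use r in \<open>auto simp: pQ0 Vb0 Va0 PP0 Wb0\<close>)
    then show "(pQ q * Vb q b xb * Va q a xa) * ((PP a b * Wb xa xb y) powr (1-r) * beta q b y xb powr r)
       = cc q a b y xb xa * exp (r * dd q a b y xb xa)"
      using cc0[of q a b y xb xa] by (auto simp: cc_def dd_def)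
  qed
  finally show ?thesis .
qed

lemma gg_deriv:
  "DERIV gg 0 :> (\<Sum>q\<in>UNIV. \<Sum>a\<in>UNIV. \<Sum>b\<in>UNIV. \<Sum>y\<in>UNIV. \<Sum>xb\<in>UNIV. \<Sum>xa\<in>UNIV.
      cc q a b y xb xa * dd q a b y xb xa)"
proof -
  have e: "gg = (\<lambda>r. \<Sum>q\<in>UNIV. \<Sum>a\<in>UNIV. \<Sum>b\<in>UNIV. \<Sum>y\<in>UNIV. \<Sum>xb\<in>UNIV. \<Sum>xa\<in>UNIV.
   cc q a b y xb xa * exp (r * dd q a b y xb xa))"
    by (rule ext) (simp add: gg_def)
  show ?thesis
    unfolding e by (intro derivative_eq_intros sum.cong refl) auto
qed

lemma gg0: "gg 0 = (\<Sum>q\<in>UNIV. \<Sum>a\<in>UNIV. \<Sum>b\<in>UNIV. \<Sum>y\<in>UNIV. \<Sum>xb\<in>UNIV. \<Sum>xa\<in>UNIV.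
      cc q a b y xb xa)"
  by (simp add: gg_def)

lemma cc_total:
  assumes PP1: "(\<Sum>a\<in>UNIV. \<Sum>b\<in>UNIV. PP a b) = 1" and W1: "\<And>xa xb. (\<Sum>y\<in>UNIV. Wb xa xb y) = 1"
  shows "(\<Sum>q\<in>UNIV. \<Sum>a\<in>UNIV. \<Sum>b\<in>UNIV. \<Sum>y\<in>UNIV. \<Sum>xb\<in>UNIV. \<Sum>xa\<in>UNIV. cc q a b y xb xa) = 1"
proof -
  have s1: "(\<Sum>y\<in>UNIV. \<Sum>xb\<in>UNIV. \<Sum>xa\<in>UNIV. cc q a b y xb xa) = pQ q * PP a b" for q a b
  proof -
    have "(\<Sum>y\<in>UNIV. \<Sum>xb\<in>UNIV. \<Sum>xa\<in>UNIV. cc q a b y xb xa) = (\<Sum>xb\<in>UNIV. \<Sum>y\<in>UNIV. \<Sum>xa\<in>UNIV. cc q a b y xb xa)"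
      by (rule sum.swap)
    also have "\<dots> = (\<Sum>xb\<in>UNIV. \<Sum>xa\<in>UNIV. \<Sum>y\<in>UNIV. cc q a b y xb xa)"
      by (rule sum.cong[OF refl], rule sum.swap)
    also have "\<dots> = (\<Sum>xb\<in>UNIV. \<Sum>xa\<in>UNIV. (pQ q * Vb q b xb * Va q a xa) * PP a b)"
      unfolding cc_def by (simp add: mult.assoc sum_distrib_left[symmetric] W1)
    also have "\<dots> = pQ q * PP a b"
      using Va Vb by (simp add: is_pmf_def sum_distrib_left[symmetric] sum_distrib_right[symmetric] mult_ac)
    finally show ?thesis .
  qed
  have "(\<Sum>q\<in>UNIV. \<Sum>a\<in>UNIV. \<Sum>b\<in>UNIV. \<Sum>y\<in>UNIV. \<Sum>xb\<in>UNIV. \<Sum>xa\<in>UNIV. cc q a b y xb xa)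
      = (\<Sum>q\<in>UNIV. \<Sum>a\<in>UNIV. \<Sum>b\<in>UNIV. pQ q * PP a b)" by (simp add: s1)
  also have "\<dots> = 1" using pQ PP1 by (simp add: is_pmf_def sum_distrib_left[symmetric])
  finally show ?thesis .
qed

lemma exists_rate:
  assumes PP1: "(\<Sum>a\<in>UNIV. \<Sum>b\<in>UNIV. PP a b) = 1" and W1: "\<And>xa xb. (\<Sum>y\<in>UNIV. Wb xa xb y) = 1"
    and D: "(\<Sum>q\<in>UNIV. \<Sum>a\<in>UNIV. \<Sum>b\<in>UNIV. \<Sum>y\<in>UNIV. \<Sum>xb\<in>UNIV. \<Sum>xa\<in>UNIV.
      cc q a b y xb xa * dd q a b y xb xa) < 0"
  shows "\<exists>r. 0 < r \<and> r < 1 \<and> ee r < 1"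
proof -
  obtain d where d: "d > 0" "\<forall>h>0. h < d \<longrightarrow> gg 0 > gg (0 + h)"
    using DERIV_neg_dec_right[OF gg_deriv D] by blast
  define r where "r = min (d/2) (1/2)"
  have r: "0 < r" "r < 1" "r < d" using d by (auto simp: r_def)
  have "ee r = gg r" using r by (intro ee_gg) auto
  also have "\<dots> < gg 0" using d r by auto
  also have "gg 0 = 1" using cc_total[OF PP1 W1] gg0 by simp
  finally show ?thesis using r by blast
qed

lemma ee0: "0 \<le> ee r"
  unfolding ee_def alpha_def beta_def
  by (intro sum_nonneg mult_nonneg_nonneg) (auto simp: pQ0 Vb0 Va0 PP0 Wb0)

end


lemma prv_reindex:
  fixes J :: "'w::finite \<Rightarrow> real" and emb :: "'t::finite \<Rightarrow> 'w"
  assumes inj: "inj emb" and r: "\<And>w. f w = v \<longleftrightarrow> w \<in> range emb"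
  shows "prv J f v = (\<Sum>t\<in>UNIV. J (emb t))"
proof -
  have "{w. f w = v} = range emb" using r by auto
  then show ?thesis unfolding prv_def using sum.reindex[OF inj, of J] by simp
qed

lemma prv_bij:
  assumes b: "bij \<sigma>"
  shows "prv (\<lambda>t. J (\<sigma> t)) (\<lambda>t. f (\<sigma> t)) v = prv J f v"
proof -
  have i: "inj \<sigma>" using b by (simp add: bij_def)
  have "\<sigma> ` {t. f (\<sigma> t) = v} = {w. f w = v}"
  proof (rule set_eqI)
    fix w
    have sw: "\<sigma> (inv \<sigma> w) = w" by (rule surj_f_inv_f[OF bij_is_surj[OF b]])
    show "w \<in> \<sigma> ` {t. f (\<sigma> t) = v} \<longleftrightarrow> w \<in> {w. f w = v}"
    proof
      assume "w \<in> {w. f w = v}"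
      then show "w \<in> \<sigma> ` {t. f (\<sigma> t) = v}" using sw by (intro image_eqI[where x="inv \<sigma> w"]) auto
    qed auto
  qed
  then have "prv J f v = sum J (\<sigma> ` {t. f (\<sigma> t) = v})" unfolding prv_def by simp
  also have "\<dots> = (\<Sum>t\<in>{t. f (\<sigma> t) = v}. J (\<sigma> t))"
  proof -
    have "inj_on \<sigma> {t. f (\<sigma> t) = v}" using i by (simp add: inj_on_def inj_def)
    from sum.reindex[OF this, of J] show ?thesis by (simp add: o_def)
  qed
  finally show ?thesis unfolding prv_def by simp
qed

lemma sum_bij_UNIV:
  fixes g :: "'w::finite \<Rightarrow> real"
  assumes "bij \<sigma>" shows "(\<Sum>t\<in>UNIV. g (\<sigma> t)) = (\<Sum>w\<in>UNIV. g w)"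
  using sum.reindex_bij_betw[of \<sigma> UNIV UNIV g] assms by (simp add: bij_def bij_betw_def)

lemma ce_bij:
  assumes b: "bij \<sigma>"
  shows "cond_entropy (\<lambda>t. J (\<sigma> t)) (\<lambda>t. A (\<sigma> t)) (\<lambda>t. B (\<sigma> t)) = cond_entropy J A B"
  unfolding cond_entropy_def
  using prv_bij[OF b, of J "\<lambda>u. (A u, B u)"] prv_bij[OF b, of J B]
    sum_bij_UNIV[OF b, of "\<lambda>w. J w * log 2 (prv J (\<lambda>u. (A u, B u)) (A w, B w) / prv J B (B w))"]
  by simp

lemma cmi_bij:
  assumes b: "bij \<sigma>"
  shows "cond_mutual_info (\<lambda>t. J (\<sigma> t)) (\<lambda>t. A (\<sigma> t)) (\<lambda>t. B (\<sigma> t)) (\<lambda>t. C (\<sigma> t)) = cond_mutual_info J A B C"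
  unfolding cond_mutual_info_def
  using prv_bij[OF b, of J "\<lambda>u. (A u, B u, C u)"] prv_bij[OF b, of J C]
    prv_bij[OF b, of J "\<lambda>u. (A u, C u)"] prv_bij[OF b, of J "\<lambda>u. (B u, C u)"]
    sum_bij_UNIV[OF b, of "\<lambda>w. J w * log 2
        ((prv J (\<lambda>u. (A u, B u, C u)) (A w, B w, C w) * prv J C (C w)) /
         (prv J (\<lambda>u. (A u, C u)) (A w, C w) * prv J (\<lambda>u. (B u, C u)) (B w, C w)))"]
  by simp

locale src =
  fixes pQ :: "'q::finite \<Rightarrow> real" and P :: "'s1::finite \<times> 's2::finite \<Rightarrow> real"
    and V1 :: "'q \<Rightarrow> 's1 \<Rightarrow> 'x1::finite \<Rightarrow> real" and V2 :: "'q \<Rightarrow> 's2 \<Rightarrow> 'x2::finite \<Rightarrow> real"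
    and W :: "'x1 \<Rightarrow> 'x2 \<Rightarrow> ('y1::finite \<times> 'y2::finite) \<Rightarrow> real"
  assumes pQ: "is_pmf pQ" and P: "is_pmf P" and V1: "\<And>q a. is_pmf (V1 q a)" and V2: "\<And>q b. is_pmf (V2 q b)"
    and W: "\<And>x1 x2. is_pmf (W x1 x2)"
begin

definition "J = joint_dist pQ P V1 V2 W"
definition "W2 x1 x2 y2 = (\<Sum>y1\<in>UNIV. W x1 x2 (y1, y2))"
definition "p2 b = (\<Sum>a\<in>UNIV. P (a, b))"
definition "K2 q b x1 = (\<Sum>a\<in>UNIV. P (a, b) * V1 q a x1)"
definition "\<beta>2 q b y x2 = (\<Sum>a\<in>UNIV. \<Sum>x\<in>UNIV. V1 q a x * P (a, b) * W2 x x2 y)"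

lemma pQ0: "0 \<le> pQ q" using pQ by (auto simp: is_pmf_def)
lemma P0: "0 \<le> P s" using P unfolding is_pmf_def by blast
lemma V10: "0 \<le> V1 q a x" using V1 by (auto simp: is_pmf_def)
lemma V20: "0 \<le> V2 q a x" using V2 by (auto simp: is_pmf_def)
lemma W0: "0 \<le> W x1 x2 y" using W[of x1 x2] unfolding is_pmf_def by blast
lemma V11: "(\<Sum>x\<in>UNIV. V1 q a x) = 1" using V1 by (auto simp: is_pmf_def)
lemma V21: "(\<Sum>x\<in>UNIV. V2 q a x) = 1" using V2 by (auto simp: is_pmf_def)
lemma pQ1: "(\<Sum>x\<in>UNIV. pQ x) = 1" using pQ by (auto simp: is_pmf_def)
lemma W1: "(\<Sum>y1\<in>UNIV. \<Sum>y2\<in>UNIV. W x1 x2 (y1, y2)) = 1" using W[of x1 x2] by (auto simp: is_pmf_def sum_UNIV_prod)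
lemma P1: "(\<Sum>a\<in>UNIV. \<Sum>b\<in>UNIV. P (a, b)) = 1" using P by (auto simp: is_pmf_def sum_UNIV_prod)

lemma prv1: "prv J (\<lambda>u. ((\<lambda>(q,s1,s2,x1,x2,y1,y2). s1) u, (\<lambda>(q,s1,s2,x1,x2,y1,y2). s2) u)) (a, b) = P (a, b)"
proof -
  have "prv J (\<lambda>u. ((\<lambda>(q,s1,s2,x1,x2,y1,y2). s1) u, (\<lambda>(q,s1,s2,x1,x2,y1,y2). s2) u)) (a, b)
     = (\<Sum>t\<in>UNIV. J ((\<lambda>(q,x1,x2,y1,y2). (q,a,b,x1,x2,y1,y2)) t))"
    by (rule prv_reindex) (auto simp: inj_on_def image_def)
  also have "\<dots> = P (a, b)"
    by (simp add: sum_UNIV_prod J_def joint_dist_def sum_distrib_left[symmetric] sum_distrib_right[symmetric] W1 V11 V21 pQ1)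
  finally show ?thesis .
qed

abbreviation "cS1 \<equiv> (\<lambda>(q::'q,s1::'s1,s2::'s2,x1::'x1,x2::'x2,y1::'y1,y2::'y2). s1)"
abbreviation "cS2 \<equiv> (\<lambda>(q::'q,s1::'s1,s2::'s2,x1::'x1,x2::'x2,y1::'y1,y2::'y2). s2)"
abbreviation "cX1 \<equiv> (\<lambda>(q::'q,s1::'s1,s2::'s2,x1::'x1,x2::'x2,y1::'y1,y2::'y2). x1)"
abbreviation "cY2 \<equiv> (\<lambda>(q::'q,s1::'s1,s2::'s2,x1::'x1,x2::'x2,y1::'y1,y2::'y2). y2)"
abbreviation "cC \<equiv> (\<lambda>(q::'q,s1::'s1,s2::'s2,x1::'x1,x2::'x2,y1::'y1,y2::'y2). (x2, s2, q))"

lemma prv2: "prv J cS2 b = p2 b"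
proof -
  have "prv J cS2 b = (\<Sum>t\<in>UNIV. J ((\<lambda>(q,s1,x1,x2,y1,y2). (q,s1,b,x1,x2,y1,y2)) t))"
    by (rule prv_reindex) (auto simp: inj_on_def image_def)
  also have "\<dots> = p2 b"
    by (simp add: sum_UNIV_prod J_def joint_dist_def sum_distrib_left[symmetric] sum_distrib_right[symmetric] W1 V11 V21 pQ1 p2_def)
  finally show ?thesis .
qed

lemma prvN1: "prv J (\<lambda>u. (cX1 u, cY2 u, cC u)) (x1, y2, (x2, b, q)) = pQ q * V2 q b x2 * K2 q b x1 * W2 x1 x2 y2"
proof -
  have "prv J (\<lambda>u. (cX1 u, cY2 u, cC u)) (x1, y2, (x2, b, q)) = (\<Sum>t\<in>UNIV. J ((\<lambda>(s1,y1). (q,s1,b,x1,x2,y1,y2)) t))"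
    by (rule prv_reindex) (auto simp: inj_on_def image_def)
  also have "\<dots> = pQ q * V2 q b x2 * K2 q b x1 * W2 x1 x2 y2"
    by (simp add: sum_UNIV_prod J_def joint_dist_def K2_def W2_def sum_distrib_left sum_distrib_right mult_ac)
  finally show ?thesis .
qed

lemma prvN2: "prv J cC (x2, b, q) = pQ q * V2 q b x2 * p2 b"
proof -
  have "prv J cC (x2, b, q) = (\<Sum>t\<in>UNIV. J ((\<lambda>(s1,x1,y1,y2). (q,s1,b,x1,x2,y1,y2)) t))"
    by (rule prv_reindex) (auto simp: inj_on_def image_def)
  also have "\<dots> = pQ q * V2 q b x2 * p2 b"
    by (simp add: sum_UNIV_prod J_def joint_dist_def sum_distrib_left[symmetric] sum_distrib_right[symmetric] W1 V11 p2_def mult_ac)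
  finally show ?thesis .
qed

lemma prvD1: "prv J (\<lambda>u. (cX1 u, cC u)) (x1, (x2, b, q)) = pQ q * V2 q b x2 * K2 q b x1"
proof -
  have "prv J (\<lambda>u. (cX1 u, cC u)) (x1, (x2, b, q)) = (\<Sum>t\<in>UNIV. J ((\<lambda>(s1,y1,y2). (q,s1,b,x1,x2,y1,y2)) t))"
    by (rule prv_reindex) (auto simp: inj_on_def image_def)
  also have "\<dots> = pQ q * V2 q b x2 * K2 q b x1"
    by (simp add: sum_UNIV_prod J_def joint_dist_def sum_distrib_left[symmetric] sum_distrib_right[symmetric] W1 K2_def mult_ac,
        simp add: sum_distrib_left mult_ac)
  finally show ?thesis .
qed

lemma prvD2: "prv J (\<lambda>u. (cY2 u, cC u)) (y2, (x2, b, q)) = pQ q * V2 q b x2 * \<beta>2 q b y2 x2"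
proof -
  have "prv J (\<lambda>u. (cY2 u, cC u)) (y2, (x2, b, q)) = (\<Sum>t\<in>UNIV. J ((\<lambda>(s1,x1,y1). (q,s1,b,x1,x2,y1,y2)) t))"
    by (rule prv_reindex) (auto simp: inj_on_def image_def)
  also have "\<dots> = pQ q * V2 q b x2 * \<beta>2 q b y2 x2"
    by (simp add: sum_UNIV_prod J_def joint_dist_def \<beta>2_def W2_def sum_distrib_left sum_distrib_right mult_ac)
  finally show ?thesis .
qed

lemma pos_facts:
  assumes "J (q,a,b,x1,x2,y1,y2) \<noteq> 0"
  shows "pQ q > 0" "P (a,b) > 0" "V1 q a x1 > 0" "V2 q b x2 > 0" "W x1 x2 (y1,y2) > 0"
    "W2 x1 x2 y2 > 0" "K2 q b x1 > 0" "p2 b > 0" "\<beta>2 q b y2 x2 > 0"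
proof -
  have nz: "pQ q \<noteq> 0" "P (a,b) \<noteq> 0" "V1 q a x1 \<noteq> 0" "V2 q b x2 \<noteq> 0" "W x1 x2 (y1,y2) \<noteq> 0"
    using assms by (auto simp: J_def joint_dist_def)
  show 1: "pQ q > 0" "P (a,b) > 0" "V1 q a x1 > 0" "V2 q b x2 > 0" "W x1 x2 (y1,y2) > 0"
    using nz pQ0[of q] P0[of "(a,b)"] V10[of q a x1] V20[of q b x2] W0[of x1 x2 "(y1,y2)"] by auto
  have "W x1 x2 (y1,y2) \<le> W2 x1 x2 y2" unfolding W2_def
    by (rule member_le_sum[of y1]) (auto simp: W0)
  then show 2: "W2 x1 x2 y2 > 0" using 1 by linarith
  have "P (a,b) * V1 q a x1 \<le> K2 q b x1" unfolding K2_def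
    by (rule member_le_sum[of a]) (auto simp: P0 V10)
  moreover have "P (a,b) * V1 q a x1 > 0" using 1 by simp
  ultimately show "K2 q b x1 > 0" by linarith
  have "P (a,b) \<le> p2 b" unfolding p2_def
    by (rule member_le_sum[of a]) (auto simp: P0)
  then show "p2 b > 0" using 1 by linarith
  have W20: "0 \<le> W2 x y z" for x y z unfolding W2_def by (intro sum_nonneg) (auto simp: W0)
  have "V1 q a x1 * P (a, b) * W2 x1 x2 y2 \<le> \<beta>2 q b y2 x2" unfolding \<beta>2_def
    by (rule order_trans[OF _ member_le_sum[of a]], rule member_le_sum[of x1])
       (auto intro!: sum_nonneg mult_nonneg_nonneg simp: V10 P0 W20)
  moreover have "V1 q a x1 * P (a, b) * W2 x1 x2 y2 > 0" using 1 2 by simp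
  ultimately show "\<beta>2 q b y2 x2 > 0" by linarith
qed

lemma info_identity:
  "ln 2 * (cond_entropy J cS1 cS2 - cond_mutual_info J cX1 cY2 cC)
   = (\<Sum>w\<in>UNIV. J w * (case w of (q,a,b,x1,x2,y1,y2) \<Rightarrow> ln (\<beta>2 q b y2 x2) - ln (P (a,b) * W2 x1 x2 y2)))"
proof -
  have pt: "ln 2 * (- (J w * log 2 (prv J (\<lambda>u. (cS1 u, cS2 u)) (cS1 w, cS2 w) / prv J cS2 (cS2 w)))
     - J w * log 2 ((prv J (\<lambda>u. (cX1 u, cY2 u, cC u)) (cX1 w, cY2 w, cC w) * prv J cC (cC w)) /
         (prv J (\<lambda>u. (cX1 u, cC u)) (cX1 w, cC w) * prv J (\<lambda>u. (cY2 u, cC u)) (cY2 w, cC w))))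
     = J w * (case w of (q,a,b,x1,x2,y1,y2) \<Rightarrow> ln (\<beta>2 q b y2 x2) - ln (P (a,b) * W2 x1 x2 y2))" for w
  proof -
    obtain q a b x1 x2 y1 y2 where w: "w = (q,a,b,x1,x2,y1,y2)" using prod_cases7[of w] by metis
    show ?thesis
    proof (cases "J w = 0")
      case True then show ?thesis by simp
    next
      case False
      note pf = pos_facts[OF False[unfolded w]]
      have "(pQ q * V2 q b x2 * K2 q b x1 * W2 x1 x2 y2 * (pQ q * V2 q b x2 * p2 b)) /
            (pQ q * V2 q b x2 * K2 q b x1 * (pQ q * V2 q b x2 * \<beta>2 q b y2 x2))
          = W2 x1 x2 y2 * p2 b / \<beta>2 q b y2 x2"
        using pf by (simp add: field_simps)
      then show ?thesis
        using pf unfolding w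
        by (simp add: prv1 prv2 prvN1 prvN2 prvD1 prvD2 log_def ln_mult ln_div algebra_simps,
            simp add: field_simps)
    qed
  qed
  show ?thesis
    unfolding cond_entropy_def cond_mutual_info_def
    by (simp add: pt[symmetric] sum_distrib_left sum_subtractf sum_negf algebra_simps)
qed

lemma W20: "0 \<le> W2 x y z" unfolding W2_def by (intro sum_nonneg) (auto simp: W0)
lemma W2_1: "(\<Sum>y\<in>UNIV. W2 x1 x2 y) = 1"
  unfolding W2_def using W1[of x1 x2] by (subst sum.swap) simp

lemma D_identity:
  "(\<Sum>q\<in>UNIV. \<Sum>a\<in>UNIV. \<Sum>b\<in>UNIV. \<Sum>y\<in>UNIV. \<Sum>xb\<in>UNIV. \<Sum>xa\<in>UNIV.
     (pQ q * V2 q b xb * V1 q a xa) * (P (a,b) * W2 xa xb y) * (ln (\<beta>2 q b y xb) - ln (P (a,b) * W2 xa xb y)))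
   = ln 2 * (cond_entropy J cS1 cS2 - cond_mutual_info J cX1 cY2 cC)"
proof -
  define \<phi> where "\<phi> q a b xa xb y = ln (\<beta>2 q b y xb) - ln (P (a,b) * W2 xa xb y)" for q a b xa xb y
  define G where "G q a b xa xb y = (pQ q * V2 q b xb * V1 q a xa) * (P (a,b) * W2 xa xb y) * \<phi> q a b xa xb y" for q a b xa xb y
  have s1: "(\<Sum>y1\<in>UNIV. \<Sum>y2\<in>UNIV. J (q,a,b,x1,x2,y1,y2) * \<phi> q a b x1 x2 y2) = (\<Sum>y2\<in>UNIV. G q a b x1 x2 y2)" for q a b x1 x2
  proof -
    have "(\<Sum>y1\<in>UNIV. \<Sum>y2\<in>UNIV. J (q,a,b,x1,x2,y1,y2) * \<phi> q a b x1 x2 y2) = (\<Sum>y2\<in>UNIV. \<Sum>y1\<in>UNIV. J (q,a,b,x1,x2,y1,y2) * \<phi> q a b x1 x2 y2)"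
      by (rule sum.swap)
    also have "\<dots> = (\<Sum>y2\<in>UNIV. G q a b x1 x2 y2)"
      by (rule sum.cong[OF refl]) (simp add: G_def J_def joint_dist_def W2_def sum_distrib_left sum_distrib_right mult_ac)
    finally show ?thesis .
  qed
  have s2: "(\<Sum>x1\<in>UNIV. \<Sum>x2\<in>UNIV. \<Sum>y2\<in>UNIV. G q a b x1 x2 y2) = (\<Sum>y2\<in>UNIV. \<Sum>x2\<in>UNIV. \<Sum>x1\<in>UNIV. G q a b x1 x2 y2)" for q a b
  proof -
    have "(\<Sum>x1\<in>UNIV. \<Sum>x2\<in>UNIV. \<Sum>y2\<in>UNIV. G q a b x1 x2 y2) = (\<Sum>x2\<in>UNIV. \<Sum>x1\<in>UNIV. \<Sum>y2\<in>UNIV. G q a b x1 x2 y2)"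
      by (rule sum.swap)
    also have "\<dots> = (\<Sum>x2\<in>UNIV. \<Sum>y2\<in>UNIV. \<Sum>x1\<in>UNIV. G q a b x1 x2 y2)"
      by (rule sum.cong[OF refl], rule sum.swap)
    also have "\<dots> = (\<Sum>y2\<in>UNIV. \<Sum>x2\<in>UNIV. \<Sum>x1\<in>UNIV. G q a b x1 x2 y2)"
      by (rule sum.swap)
    finally show ?thesis .
  qed
  have "ln 2 * (cond_entropy J cS1 cS2 - cond_mutual_info J cX1 cY2 cC)
      = (\<Sum>q\<in>UNIV. \<Sum>a\<in>UNIV. \<Sum>b\<in>UNIV. \<Sum>x1\<in>UNIV. \<Sum>x2\<in>UNIV. \<Sum>y1\<in>UNIV. \<Sum>y2\<in>UNIV.
           J (q,a,b,x1,x2,y1,y2) * \<phi> q a b x1 x2 y2)"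
    unfolding info_identity by (simp add: sum_UNIV_prod \<phi>_def)
  also have "\<dots> = (\<Sum>q\<in>UNIV. \<Sum>a\<in>UNIV. \<Sum>b\<in>UNIV. \<Sum>y\<in>UNIV. \<Sum>xb\<in>UNIV. \<Sum>xa\<in>UNIV. G q a b xa xb y)"
    by (simp add: s1 s2)
  finally show ?thesis by (simp add: G_def \<phi>_def)
qed

end


locale both = s2: src pQ P V1 V2 W
  for pQ :: "'q::finite \<Rightarrow> real" and P :: "'s1::finite \<times> 's2::finite \<Rightarrow> real"
    and V1 :: "'q \<Rightarrow> 's1 \<Rightarrow> 'x1::finite \<Rightarrow> real" and V2 :: "'q \<Rightarrow> 's2 \<Rightarrow> 'x2::finite \<Rightarrow> real"
    and W :: "'x1 \<Rightarrow> 'x2 \<Rightarrow> ('y1::finite \<times> 'y2::finite) \<Rightarrow> real"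
begin

lemma swapP: "is_pmf (\<lambda>p. P (snd p, fst p))"
proof -
  have "(\<Sum>p\<in>UNIV. P (snd p, fst p)) = (\<Sum>b\<in>UNIV. \<Sum>a\<in>UNIV. P (a, b))" by (simp add: sum_UNIV_prod)
  also have "\<dots> = 1" using s2.P1 by (subst sum.swap) simp
  finally show ?thesis using s2.P0 by (simp add: is_pmf_def)
qed

lemma swapW: "is_pmf ((\<lambda>x2 x1 p. W x1 x2 (snd p, fst p)) x2 x1)"
proof -
  have "(\<Sum>p\<in>UNIV. W x1 x2 (snd p, fst p)) = (\<Sum>b\<in>UNIV. \<Sum>a\<in>UNIV. W x1 x2 (a, b))" by (simp add: sum_UNIV_prod)
  also have "\<dots> = 1" using s2.W1 by (subst sum.swap) simp
  finally show ?thesis using s2.W0 by (simp add: is_pmf_def)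
qed

sublocale s1: src pQ "\<lambda>p. P (snd p, fst p)" V2 V1 "\<lambda>x2 x1 p. W x1 x2 (snd p, fst p)"
  using s2.pQ s2.V1 s2.V2 swapP swapW by unfold_locales auto

sublocale d2: blk pQ "\<lambda>a b. P (a, b)" V1 V2 s2.W2
  using s2.pQ s2.V1 s2.V2 s2.P0 s2.W20 by unfold_locales auto

sublocale d1: blk pQ "\<lambda>a b. P (b, a)" V2 V1 s1.W2
  using s2.pQ s2.V1 s2.V2 s2.P0 s1.W20 by unfold_locales auto

lemma D2:
  "(\<Sum>q\<in>UNIV. \<Sum>a\<in>UNIV. \<Sum>b\<in>UNIV. \<Sum>y\<in>UNIV. \<Sum>xb\<in>UNIV. \<Sum>xa\<in>UNIV. d2.cc q a b y xb xa * d2.dd q a b y xb xa)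
   = ln 2 * (cond_entropy s2.J s2.cS1 s2.cS2 - cond_mutual_info s2.J s2.cX1 s2.cY2 s2.cC)"
  unfolding s2.D_identity[symmetric] d2.cc_def d2.dd_def d2.beta_def s2.\<beta>2_def by (rule refl)

lemma D1:
  "(\<Sum>q\<in>UNIV. \<Sum>a\<in>UNIV. \<Sum>b\<in>UNIV. \<Sum>y\<in>UNIV. \<Sum>xb\<in>UNIV. \<Sum>xa\<in>UNIV. d1.cc q a b y xb xa * d1.dd q a b y xb xa)
   = ln 2 * (cond_entropy s1.J s1.cS1 s1.cS2 - cond_mutual_info s1.J s1.cX1 s1.cY2 s1.cC)"
  unfolding s1.D_identity[symmetric] d1.cc_def d1.dd_def d1.beta_def s1.\<beta>2_def by (simp only: fst_conv snd_conv)

definition "\<sigma> = (\<lambda>(q::'q, u::'s2, v::'s1, x::'x2, x'::'x1, y::'y2, y'::'y1). (q, v, u, x', x, y', y))"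

lemma bij_\<sigma>: "bij \<sigma>"
proof (rule o_bij)
  let ?g = "\<lambda>(q::'q, v::'s1, u::'s2, x'::'x1, x::'x2, y'::'y1, y::'y2). (q, u, v, x, x', y, y')"
  show "?g \<circ> \<sigma> = id" by (rule ext) (auto simp: \<sigma>_def)
  show "\<sigma> \<circ> ?g = id" by (rule ext) (auto simp: \<sigma>_def)
qed

lemma H1: "cond_entropy s1.J s1.cS1 s1.cS2 = cond_entropy s2.J s2.cS2 s2.cS1"
proof -
  have e1: "s1.J = (\<lambda>t. s2.J (\<sigma> t))"
    by (rule ext) (auto simp: s1.J_def s2.J_def joint_dist_def \<sigma>_def mult_ac)
  have e2: "s1.cS1 = (\<lambda>t. s2.cS2 (\<sigma> t))" by (rule ext) (auto simp: \<sigma>_def)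
  have e3: "s1.cS2 = (\<lambda>t. s2.cS1 (\<sigma> t))" by (rule ext) (auto simp: \<sigma>_def)
  have "cond_entropy s1.J s1.cS1 s1.cS2 = cond_entropy (\<lambda>t. s2.J (\<sigma> t)) (\<lambda>t. s2.cS2 (\<sigma> t)) (\<lambda>t. s2.cS1 (\<sigma> t))"
    by (simp only: e1 e2 e3)
  also have "\<dots> = cond_entropy s2.J s2.cS2 s2.cS1" by (rule ce_bij[OF bij_\<sigma>])
  finally show ?thesis .
qed

lemma I1: "cond_mutual_info s1.J s1.cX1 s1.cY2 s1.cC =
  cond_mutual_info s2.J (\<lambda>(q,s1,s2,x1,x2,y1,y2). x2) (\<lambda>(q,s1,s2,x1,x2,y1,y2). y1) (\<lambda>(q,s1,s2,x1,x2,y1,y2). (x1, s1, q))"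
proof -
  have e1: "s1.J = (\<lambda>t. s2.J (\<sigma> t))"
    by (rule ext) (auto simp: s1.J_def s2.J_def joint_dist_def \<sigma>_def mult_ac)
  have e2: "s1.cX1 = (\<lambda>t. (\<lambda>(q::'q,s1::'s1,s2::'s2,x1::'x1,x2::'x2,y1::'y1,y2::'y2). x2) (\<sigma> t))" by (rule ext) (auto simp: \<sigma>_def)
  have e3: "s1.cY2 = (\<lambda>t. (\<lambda>(q::'q,s1::'s1,s2::'s2,x1::'x1,x2::'x2,y1::'y1,y2::'y2). y1) (\<sigma> t))" by (rule ext) (auto simp: \<sigma>_def)
  have e4: "s1.cC = (\<lambda>t. (\<lambda>(q::'q,s1::'s1,s2::'s2,x1::'x1,x2::'x2,y1::'y1,y2::'y2). (x1, s1, q)) (\<sigma> t))" by (rule ext) (auto simp: \<sigma>_def)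
  show ?thesis by (simp only: e1 e2 e3 e4 cmi_bij[OF bij_\<sigma>])
qed

lemma err_decomp:
  "error_prob P W n n (\<lambda>j s ys. c1 s ! j) (\<lambda>j s ys. c2 s ! j) (\<lambda>y1 s1. d1.dec n c2 c1 y1 s1) (\<lambda>y2 s2. d2.dec n c1 c2 y2 s2)
   \<le> d2.Err n c1 c2 + d1.Err n c2 c1"
proof -
  define Pn where "Pn s1 s2 = (\<Prod>k<n. P (s1 ! k, s2 ! k))" for s1 s2
  define Wn where "Wn s1 s2 y1 y2 = (\<Prod>j<n. W (c1 s1 ! j) (c2 s2 ! j) (y1 ! j, y2 ! j))" for s1 s2 y1 y2
  define iA where "iA s1 s2 y2 = (if d2.dec n c1 c2 y2 s2 \<noteq> s1 then 1 else (0::real))" for s1 s2 y2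
  define iB where "iB s1 s2 y1 = (if d1.dec n c2 c1 y1 s1 \<noteq> s2 then 1 else (0::real))" for s1 s2 y1
  have Pn0: "0 \<le> Pn s1 s2" for s1 s2 unfolding Pn_def by (intro prod_nonneg) (auto simp: s2.P0)
  have Wn0: "0 \<le> Wn s1 s2 y1 y2" for s1 s2 y1 y2 unfolding Wn_def by (intro prod_nonneg) (auto simp: s2.W0)
  have "error_prob P W n n (\<lambda>j s ys. c1 s ! j) (\<lambda>j s ys. c2 s ! j) (\<lambda>y1 s1. d1.dec n c2 c1 y1 s1) (\<lambda>y2 s2. d2.dec n c1 c2 y2 s2)
    = (\<Sum>s1\<in>LS n. \<Sum>s2\<in>LS n. \<Sum>y1\<in>LS n. \<Sum>y2\<in>LS n. Pn s1 s2 * Wn s1 s2 y1 y2 *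
        (if d2.dec n c1 c2 y2 s2 \<noteq> s1 \<or> d1.dec n c2 c1 y1 s1 \<noteq> s2 then 1 else 0))"
    unfolding error_prob_def LS_def Pn_def Wn_def by simp
  also have "\<dots> \<le> (\<Sum>s1\<in>LS n. \<Sum>s2\<in>LS n. \<Sum>y1\<in>LS n. \<Sum>y2\<in>LS n.
        Pn s1 s2 * Wn s1 s2 y1 y2 * iA s1 s2 y2 + Pn s1 s2 * Wn s1 s2 y1 y2 * iB s1 s2 y1)"
  proof (intro sum_mono)
    fix s1 s2 y1 y2
    have "(if d2.dec n c1 c2 y2 s2 \<noteq> s1 \<or> d1.dec n c2 c1 y1 s1 \<noteq> s2 then 1 else 0) \<le> iA s1 s2 y2 + iB s1 s2 y1"
      by (auto simp: iA_def iB_def)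
    then have "Pn s1 s2 * Wn s1 s2 y1 y2 * (if d2.dec n c1 c2 y2 s2 \<noteq> s1 \<or> d1.dec n c2 c1 y1 s1 \<noteq> s2 then 1 else 0)
        \<le> Pn s1 s2 * Wn s1 s2 y1 y2 * (iA s1 s2 y2 + iB s1 s2 y1)"
      by (intro mult_left_mono mult_nonneg_nonneg Pn0 Wn0)
    then show "Pn s1 s2 * Wn s1 s2 y1 y2 * (if d2.dec n c1 c2 y2 s2 \<noteq> s1 \<or> d1.dec n c2 c1 y1 s1 \<noteq> s2 then 1 else 0)
        \<le> Pn s1 s2 * Wn s1 s2 y1 y2 * iA s1 s2 y2 + Pn s1 s2 * Wn s1 s2 y1 y2 * iB s1 s2 y1"
      by (simp add: distrib_left)
  qed
  also have "\<dots> = (\<Sum>s1\<in>LS n. \<Sum>s2\<in>LS n. \<Sum>y1\<in>LS n. \<Sum>y2\<in>LS n. Pn s1 s2 * Wn s1 s2 y1 y2 * iA s1 s2 y2)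
      + (\<Sum>s1\<in>LS n. \<Sum>s2\<in>LS n. \<Sum>y1\<in>LS n. \<Sum>y2\<in>LS n. Pn s1 s2 * Wn s1 s2 y1 y2 * iB s1 s2 y1)"
    by (simp add: sum.distrib)
  also have "(\<Sum>s1\<in>LS n. \<Sum>s2\<in>LS n. \<Sum>y1\<in>LS n. \<Sum>y2\<in>LS n. Pn s1 s2 * Wn s1 s2 y1 y2 * iA s1 s2 y2) = d2.Err n c1 c2"
  proof -
    have "(\<Sum>s1\<in>LS n. \<Sum>s2\<in>LS n. \<Sum>y1\<in>LS n. \<Sum>y2\<in>LS n. Pn s1 s2 * Wn s1 s2 y1 y2 * iA s1 s2 y2)
       = (\<Sum>s1\<in>LS n. \<Sum>s2\<in>LS n. \<Sum>y2\<in>LS n. \<Sum>y1\<in>LS n. Pn s1 s2 * Wn s1 s2 y1 y2 * iA s1 s2 y2)"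
      by (intro sum.cong refl sum.swap)
    also have "\<dots> = (\<Sum>s1\<in>LS n. \<Sum>s2\<in>LS n. \<Sum>y2\<in>LS n. Pn s1 s2 * (\<Sum>y1\<in>LS n. Wn s1 s2 y1 y2) * iA s1 s2 y2)"
      by (simp add: sum_distrib_left sum_distrib_right)
    also have "\<dots> = d2.Err n c1 c2"
    proof -
      have "(\<Sum>y1\<in>LS n. Wn s1 s2 y1 y2) = d2.Wbn n (c1 s1) (c2 s2) y2" for s1 s2 y2
        unfolding Wn_def d2.Wbn_def s2.W2_def
        by (rule sum_LS_prod[of "\<lambda>j y. W (c1 s1 ! j) (c2 s2 ! j) (y, y2 ! j)"])
      then show ?thesis
        unfolding d2.Err_def d2.Lx_def d2.PPn_def Pn_def iA_def by simp
    qed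
    finally show ?thesis .
  qed
  also have "(\<Sum>s1\<in>LS n. \<Sum>s2\<in>LS n. \<Sum>y1\<in>LS n. \<Sum>y2\<in>LS n. Pn s1 s2 * Wn s1 s2 y1 y2 * iB s1 s2 y1) = d1.Err n c2 c1"
  proof -
    have "(\<Sum>s1\<in>LS n. \<Sum>s2\<in>LS n. \<Sum>y1\<in>LS n. \<Sum>y2\<in>LS n. Pn s1 s2 * Wn s1 s2 y1 y2 * iB s1 s2 y1)
       = (\<Sum>s1\<in>LS n. \<Sum>s2\<in>LS n. \<Sum>y1\<in>LS n. Pn s1 s2 * (\<Sum>y2\<in>LS n. Wn s1 s2 y1 y2) * iB s1 s2 y1)"
      by (simp add: sum_distrib_left sum_distrib_right)
    also have "\<dots> = (\<Sum>s2\<in>LS n. \<Sum>s1\<in>LS n. \<Sum>y1\<in>LS n. Pn s1 s2 * (\<Sum>y2\<in>LS n. Wn s1 s2 y1 y2) * iB s1 s2 y1)"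
      by (rule sum.swap)
    also have "\<dots> = d1.Err n c2 c1"
    proof -
      have "(\<Sum>y2\<in>LS n. Wn s1 s2 y1 y2) = d1.Wbn n (c2 s2) (c1 s1) y1" for s1 s2 y1
        unfolding Wn_def d1.Wbn_def s1.W2_def
        using sum_LS_prod[of "\<lambda>j y. W (c1 s1 ! j) (c2 s2 ! j) (y1 ! j, y)"] by simp
      then show ?thesis
        unfolding d1.Err_def d1.Lx_def d1.PPn_def Pn_def iB_def by simp
    qed
    finally show ?thesis .
  qed
  finally show ?thesis .
qed

lemma wsum: "(\<Sum>q\<in>LS n. d2.wQ n q * (\<Sum>c1\<in>PiE (LS n) (\<lambda>_. LS n). d2.wA n q c1 *
      (\<Sum>c2\<in>PiE (LS n) (\<lambda>_. LS n). d2.wB n q c2 * x))) = x"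
proof -
  have b: "(\<Sum>c2\<in>PiE (LS n) (\<lambda>_. LS n). d2.wB n q c2) = 1" for q
    unfolding d2.wB_def by (rule sum_PiE_one) (auto simp: d2.Vbn1)
  have a: "(\<Sum>c1\<in>PiE (LS n) (\<lambda>_. LS n). d2.wA n q c1) = 1" for q
    unfolding d2.wA_def by (rule sum_PiE_one) (auto simp: d2.Van1)
  have q: "(\<Sum>q\<in>LS n. d2.wQ n q) = 1"
    unfolding d2.wQ_def using sum_LS_prod[of "\<lambda>j q. pQ q" n] s2.pQ1 by simp
  show ?thesis
    by (simp add: sum_distrib_right[symmetric] mult.assoc[symmetric] a b q)
qed

lemma main_both:
  assumes h2: "cond_entropy s2.J s2.cS1 s2.cS2 < cond_mutual_info s2.J s2.cX1 s2.cY2 s2.cC"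
    and h1: "cond_entropy s2.J s2.cS2 s2.cS1 < cond_mutual_info s2.J (\<lambda>(q,s1,s2,x1,x2,y1,y2). x2) (\<lambda>(q,s1,s2,x1,x2,y1,y2). y1) (\<lambda>(q,s1,s2,x1,x2,y1,y2). (x1, s1, q))"
  shows "achievable_restricted P W 1"
proof -
  have ln2: "ln (2::real) > 0" by simp
  obtain r2 where r2: "0 < r2" "r2 < 1" "d2.ee r2 < 1"
  proof -
    have "(\<Sum>q\<in>UNIV. \<Sum>a\<in>UNIV. \<Sum>b\<in>UNIV. \<Sum>y\<in>UNIV. \<Sum>xb\<in>UNIV. \<Sum>xa\<in>UNIV. d2.cc q a b y xb xa * d2.dd q a b y xb xa) < 0"
      unfolding D2 using h2 ln2 by (simp add: mult_pos_neg)
    from d2.exists_rate[OF _ _ this] s2.P1 s2.W2_1 that show ?thesis by auto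
  qed
  obtain r1 where r1: "0 < r1" "r1 < 1" "d1.ee r1 < 1"
  proof -
    have "(\<Sum>q\<in>UNIV. \<Sum>a\<in>UNIV. \<Sum>b\<in>UNIV. \<Sum>y\<in>UNIV. \<Sum>xb\<in>UNIV. \<Sum>xa\<in>UNIV. d1.cc q a b y xb xa * d1.dd q a b y xb xa) < 0"
      unfolding D1 H1 I1 using h1 ln2 by (simp add: mult_pos_neg)
    moreover have "(\<Sum>a\<in>UNIV. \<Sum>b\<in>UNIV. P (b, a)) = 1" using s1.P1 by simp
    ultimately show ?thesis using d1.exists_rate s1.W2_1 that by auto
  qed
  define e2 where "e2 = d2.ee r2"
  define e1 where "e1 = d1.ee r1"
  have e0: "0 \<le> e2" "0 \<le> e1" unfolding e2_def e1_def by (simp_all add: d2.ee0 d1.ee0)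
  show ?thesis unfolding achievable_restricted_def
  proof (intro allI impI)
    fix \<epsilon> :: real assume eps: "\<epsilon> > 0"
    have "(\<lambda>n. e2 ^ n + e1 ^ n) \<longlonglongrightarrow> 0"
      using e0 r2 r1 by (intro tendsto_add_zero LIMSEQ_power_zero) (auto simp: e2_def e1_def)
    then have "eventually (\<lambda>n. e2 ^ n + e1 ^ n < \<epsilon>) sequentially"
      using eps by (rule order_tendstoD(2))
    then obtain N where N: "\<And>n. n \<ge> N \<Longrightarrow> e2 ^ n + e1 ^ n < \<epsilon>"
      unfolding eventually_sequentially by blast
    define n where "n = Suc N"
    have small: "e2 ^ n + e1 ^ n < \<epsilon>" using N[of n] by (simp add: n_def del: power_Suc)
    let ?C = "PiE (LS n) (\<lambda>_. LS n)"
    define E where "E c1 c2 = error_prob P W n n (\<lambda>j s ys. c1 s ! j) (\<lambda>j s ys. c2 s ! j)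
        (\<lambda>y1 s1. d1.dec n c2 c1 y1 s1) (\<lambda>y2 s2. d2.dec n c1 c2 y2 s2)" for c1 c2
    have "\<exists>c1\<in>?C. \<exists>c2\<in>?C. E c1 c2 < \<epsilon>"
    proof (rule ccontr)
      assume "\<not> ?thesis"
      then have ge: "\<And>c1 c2. c1 \<in> ?C \<Longrightarrow> c2 \<in> ?C \<Longrightarrow> \<epsilon> \<le> E c1 c2" by (meson not_le)
      have wQ0: "0 \<le> d2.wQ n q" for q unfolding d2.wQ_def by (intro prod_nonneg) (auto simp: s2.pQ0)
      have wA0: "0 \<le> d2.wA n q c" for q c unfolding d2.wA_def by (intro prod_nonneg) (auto simp: d2.Van0)
      have wB0: "0 \<le> d2.wB n q c" for q c unfolding d2.wB_def by (intro prod_nonneg) (auto simp: d2.Vbn0)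
      have "\<epsilon> = (\<Sum>q\<in>LS n. d2.wQ n q * (\<Sum>c1\<in>?C. d2.wA n q c1 * (\<Sum>c2\<in>?C. d2.wB n q c2 * \<epsilon>)))"
        by (rule wsum[symmetric])
      also have "\<dots> \<le> (\<Sum>q\<in>LS n. d2.wQ n q * (\<Sum>c1\<in>?C. d2.wA n q c1 * (\<Sum>c2\<in>?C. d2.wB n q c2 * E c1 c2)))"
      proof (rule sum_mono, rule mult_left_mono[OF _ wQ0], rule sum_mono, rule mult_left_mono[OF _ wA0],
             rule sum_mono, rule mult_left_mono[OF _ wB0])
        fix q and c1 :: "'s1 list \<Rightarrow> 'x1 list" and c2 :: "'s2 list \<Rightarrow> 'x2 list"
        assume "c1 \<in> ?C" "c2 \<in> ?C"
        then show "\<epsilon> \<le> E c1 c2" by (rule ge)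
      qed
      also have "\<dots> \<le> (\<Sum>q\<in>LS n. d2.wQ n q * (\<Sum>c1\<in>?C. d2.wA n q c1 * (\<Sum>c2\<in>?C. d2.wB n q c2 * (d2.Err n c1 c2 + d1.Err n c2 c1))))"
        unfolding E_def
        by (rule sum_mono, rule mult_left_mono[OF _ wQ0], rule sum_mono, rule mult_left_mono[OF _ wA0],
             rule sum_mono, rule mult_left_mono[OF _ wB0], rule err_decomp)
      also have "\<dots> = d2.Avg n + (\<Sum>q\<in>LS n. d2.wQ n q * (\<Sum>c1\<in>?C. d2.wA n q c1 * (\<Sum>c2\<in>?C. d2.wB n q c2 * d1.Err n c2 c1)))"
        unfolding d2.Avg_def by (simp add: distrib_left sum.distrib)
      also have "(\<Sum>q\<in>LS n. d2.wQ n q * (\<Sum>c1\<in>?C. d2.wA n q c1 * (\<Sum>c2\<in>?C. d2.wB n q c2 * d1.Err n c2 c1))) = d1.Avg n"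
      proof -
        have wa: "d1.wA n q c = d2.wB n q c" for q c by (simp add: d1.wA_def d2.wB_def d1.Van_def d2.Vbn_def)
        have wb: "d1.wB n q c = d2.wA n q c" for q c by (simp add: d1.wB_def d2.wA_def d1.Vbn_def d2.Van_def)
        have sw: "(\<Sum>c1\<in>?C. d2.wA n q c1 * (\<Sum>c2\<in>?C. d2.wB n q c2 * d1.Err n c2 c1))
           = (\<Sum>c2\<in>?C. d2.wB n q c2 * (\<Sum>c1\<in>?C. d2.wA n q c1 * d1.Err n c2 c1))" for q
          by (rule swap1)
        have "d1.Avg n = (\<Sum>q\<in>LS n. d2.wQ n q * (\<Sum>c2\<in>?C. d2.wB n q c2 * (\<Sum>c1\<in>?C. d2.wA n q c1 * d1.Err n c2 c1)))"
          unfolding d1.Avg_def by (intro sum.cong refl) (simp only: wa wb)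
        then show ?thesis by (simp only: sw)
      qed
      also have "d2.Avg n + d1.Avg n \<le> e2 ^ n + e1 ^ n"
        unfolding e2_def e1_def by (intro add_mono d2.avg_bound d1.avg_bound r2 r1)
      finally show False using small by simp
    qed
    then obtain c1 c2 where c: "E c1 c2 < \<epsilon>" by blast
    show "\<exists>m n. 0 < m \<and> 0 < n \<and> real n / real m = 1 \<and>
        (\<exists>(f1 :: nat \<Rightarrow> 's1 list \<Rightarrow> 'y1 list \<Rightarrow> 'x1) (f2 :: nat \<Rightarrow> 's2 list \<Rightarrow> 'y2 list \<Rightarrow> 'x2) g1 g2.
           restricted_encoder f1 \<and> restricted_encoder f2 \<and> error_prob P W m n f1 f2 g1 g2 < \<epsilon>)"
    proof -
      have r1: "restricted_encoder (\<lambda>j s (ys :: 'y1 list). c1 s ! j)" by (simp add: restricted_encoder_def)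
      have r2: "restricted_encoder (\<lambda>j s (ys :: 'y2 list). c2 s ! j)" by (simp add: restricted_encoder_def)
      have er: "error_prob P W n n (\<lambda>j s ys. c1 s ! j) (\<lambda>j s ys. c2 s ! j)
        (\<lambda>y1 s1. d1.dec n c2 c1 y1 s1) (\<lambda>y2 s2. d2.dec n c1 c2 y2 s2) < \<epsilon>"
        using c by (simp add: E_def)
      have n0: "0 < n" "real n / real n = 1" by (simp_all add: n_def)
      show ?thesis
        apply (rule exI[of _ n], rule exI[of _ n])
        apply (rule conjI[OF n0(1)], rule conjI[OF n0(1)], rule conjI[OF n0(2)])
        apply (rule exI[of _ "\<lambda>j s ys. c1 s ! j"], rule exI[of _ "\<lambda>j s ys. c2 s ! j"])
        apply (rule exI[of _ "\<lambda>y1 s1. d1.dec n c2 c1 y1 s1"], rule exI[of _ "\<lambda>y2 s2. d2.dec n c1 c2 y2 s2"])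
        using r1 r2 er by blast
    qed
  qed
qed

end
theorem corollary1:
  fixes P :: "'s1::finite \<times> 's2::finite \<Rightarrow> real"
    and W :: "'x1::finite \<Rightarrow> 'x2::finite \<Rightarrow> ('y1::finite \<times> 'y2::finite) \<Rightarrow> real"
  assumes "is_pmf P"
    and "\<And>x1 x2. is_pmf (W x1 x2)"
    and "\<exists>(pQ :: 'q::finite \<Rightarrow> real) V1 V2.
           is_pmf pQ \<and> (\<forall>q s1. is_pmf (V1 q s1)) \<and> (\<forall>q s2. is_pmf (V2 q s2)) \<and>
           (let J = joint_dist pQ P V1 V2 W in
              cond_entropy J (\<lambda>(q,s1,s2,x1,x2,y1,y2). s1) (\<lambda>(q,s1,s2,x1,x2,y1,y2). s2)
                < cond_mutual_info J (\<lambda>(q,s1,s2,x1,x2,y1,y2). x1) (\<lambda>(q,s1,s2,x1,x2,y1,y2). y2)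
                    (\<lambda>(q,s1,s2,x1,x2,y1,y2). (x2, s2, q)) \<and>
              cond_entropy J (\<lambda>(q,s1,s2,x1,x2,y1,y2). s2) (\<lambda>(q,s1,s2,x1,x2,y1,y2). s1)
                < cond_mutual_info J (\<lambda>(q,s1,s2,x1,x2,y1,y2). x2) (\<lambda>(q,s1,s2,x1,x2,y1,y2). y1)
                    (\<lambda>(q,s1,s2,x1,x2,y1,y2). (x1, s1, q)))"
  shows "achievable_restricted P W 1"
proof -
  from assms(3) obtain pQ :: "'q \<Rightarrow> real" and V1 V2 where
    h: "is_pmf pQ" "\<forall>q s1. is_pmf (V1 q s1)" "\<forall>q s2. is_pmf (V2 q s2)"
    "let J = joint_dist pQ P V1 V2 W in
              cond_entropy J (\<lambda>(q,s1,s2,x1,x2,y1,y2). s1) (\<lambda>(q,s1,s2,x1,x2,y1,y2). s2)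
                < cond_mutual_info J (\<lambda>(q,s1,s2,x1,x2,y1,y2). x1) (\<lambda>(q,s1,s2,x1,x2,y1,y2). y2)
                    (\<lambda>(q,s1,s2,x1,x2,y1,y2). (x2, s2, q)) \<and>
              cond_entropy J (\<lambda>(q,s1,s2,x1,x2,y1,y2). s2) (\<lambda>(q,s1,s2,x1,x2,y1,y2). s1)
                < cond_mutual_info J (\<lambda>(q,s1,s2,x1,x2,y1,y2). x2) (\<lambda>(q,s1,s2,x1,x2,y1,y2). y1)
                    (\<lambda>(q,s1,s2,x1,x2,y1,y2). (x1, s1, q))"
    by blast
  interpret both pQ P V1 V2 W
    by unfold_locales (use h assms(1,2) in auto)
  have j: "s2.J = joint_dist pQ P V1 V2 W" by (simp add: s2.J_def)
  show ?thesis
    by (rule main_both) (use h(4) in \<open>simp_all add: j Let_def\<close>)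
qed

end
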